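(* For $\lambda>0$ let $N_\lambda$ be a Poisson random variable with parameter $\lambda$. Then $$\inf_{\lambda>0}P\left\{|N_\lambda-E[N_\lambda]|\le\sqrt{\mathrm{Var}(N_\lambda)}\right\}=1.5e^{-1}.$$ *)

theory Defs
  imports "HOL-Probability.Probability"
begin

end

theory Submission
  imports Defs
begin


definition PP :: "real \<Rightarrow> nat \<Rightarrow> real" where "PP l k = l ^ k / fact k * exp (- l)"

lemma exp_series_real: "(\<lambda>n. l ^ n / fact n) sums exp (l::real)"
  using exp_converges[of l] by (simp add: divide_inverse mult.commute)

lemma series_n: "(\<lambda>n. real n * (l ^ n / fact n)) sums (l * exp (l::real))"
proof -
  have "(\<lambda>n. l * (l ^ n / fact n)) sums (l * exp l)"
    using sums_mult[OF exp_series_real] .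
  moreover have "(\<lambda>n. real (Suc n) * (l ^ Suc n / fact (Suc n))) = (\<lambda>n. l * (l ^ n / fact n))"
    by (auto simp: fun_eq_iff fact_Suc simp del: of_nat_Suc)
  ultimately have "(\<lambda>n. real (Suc n) * (l ^ Suc n / fact (Suc n))) sums (l * exp l)" by simp
  then show ?thesis by (subst (asm) sums_Suc_iff) simp
qed

lemma series_n2: "(\<lambda>n. (real n)^2 * (l ^ n / fact n)) sums (l * (l * exp l + exp (l::real)))"
proof -
  have "(\<lambda>n. l * (real n * (l ^ n / fact n) + l ^ n / fact n)) sums (l * (l * exp l + exp l))"
    by (intro sums_mult sums_add series_n exp_series_real)
  moreover have "(\<lambda>n. (real (Suc n))^2 * (l ^ Suc n / fact (Suc n))) = (\<lambda>n. l * (real n * (l ^ n / fact n) + l ^ n / fact n))"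
  proof
    fix n
    have "(real (Suc n))^2 * (l ^ Suc n / fact (Suc n)) = real (Suc n) * (l * (l ^ n / fact n))"
      by (simp add: fact_Suc power2_eq_square del: of_nat_Suc)
    also have "\<dots> = l * (real n * (l ^ n / fact n) + l ^ n / fact n)" by (simp add: algebra_simps add_divide_distrib)
    finally show "(real (Suc n))^2 * (l ^ Suc n / fact (Suc n)) = l * (real n * (l ^ n / fact n) + l ^ n / fact n)" .
  qed
  ultimately have "(\<lambda>n. (real (Suc n))^2 * (l ^ Suc n / fact (Suc n))) sums (l * (l * exp l + exp l))" by simp
  then show ?thesis by (subst (asm) sums_Suc_iff) simp
qed

lemma expectation_nat_pmf:
  fixes p :: "nat pmf" and f :: "nat \<Rightarrow> real"
  assumes s: "(\<lambda>n. pmf p n * f n) sums S" and nn: "\<And>n. 0 \<le> f n"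
  shows "measure_pmf.expectation p f = S"
proof -
  have "measure_pmf.expectation p f = (\<integral>n. pmf p n * f n \<partial>count_space UNIV)"
    unfolding measure_pmf_eq_density by (subst integral_density) auto
  also have "integrable (count_space UNIV) (\<lambda>n. pmf p n * f n)"
    using s nn unfolding integrable_count_space_nat_iff
    by (simp add: sums_iff pmf_nonneg)
  hence "(\<integral>n. pmf p n * f n \<partial>count_space UNIV) = S"
    using s by (subst integral_count_space_nat) (simp_all add: sums_iff)
  finally show ?thesis .
qed

lemma poisson_expectation:
  assumes "0 < l"
  shows "measure_pmf.expectation (poisson_pmf l) real = l"
proof (rule expectation_nat_pmf)
  have "(\<lambda>n. exp (- l) * (real n * (l ^ n / fact n))) sums (exp (-l) * (l * exp l))"
    by (intro sums_mult series_n)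
  then show "(\<lambda>n. pmf (poisson_pmf l) n * real n) sums l"
    using assms by (simp add: mult_ac exp_minus field_simps)
qed simp

lemma poisson_variance:
  assumes "0 < l"
  shows "measure_pmf.variance (poisson_pmf l) real = l"
proof -
  have "measure_pmf.variance (poisson_pmf l) real = measure_pmf.expectation (poisson_pmf l) (\<lambda>n. (real n - l)^2)"
    using poisson_expectation[OF assms] by simp
  also have "\<dots> = l"
  proof (rule expectation_nat_pmf)
    have "(\<lambda>n. exp (- l) * ((real n)^2 * (l ^ n / fact n) - 2 * l * (real n * (l ^ n / fact n)) + l^2 * (l ^ n / fact n)))
       sums (exp (-l) * (l * (l * exp l + exp l) - 2 * l * (l * exp l) + l^2 * exp l))"
      by (intro sums_mult sums_add sums_diff series_n2 series_n exp_series_real)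
    moreover have "exp (-l) * (l * (l * exp l + exp l) - 2 * l * (l * exp l) + l^2 * exp l) = l"
      by (simp add: exp_minus field_simps power2_eq_square)
    ultimately show "(\<lambda>n. pmf (poisson_pmf l) n * (real n - l)^2) sums l"
      using assms by (simp add: field_simps power2_eq_square)
  qed simp
  finally show ?thesis .
qed

lemma finite_set_sd: "finite {k::nat. \<bar>real k - l\<bar> \<le> sqrt l}"
proof -
  have "{k::nat. \<bar>real k - l\<bar> \<le> sqrt l} \<subseteq> {..nat \<lceil>l + sqrt l\<rceil>}"
  proof
    fix k assume "k \<in> {k::nat. \<bar>real k - l\<bar> \<le> sqrt l}"
    then have "real k \<le> l + sqrt l" by auto
    then have "\<lceil>real k\<rceil> \<le> \<lceil>l + sqrt l\<rceil>" by (rule ceiling_mono)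
    then show "k \<in> {..nat \<lceil>l + sqrt l\<rceil>}" by simp
  qed
  then show ?thesis using finite_subset by blast
qed

lemma prob_eq:
  assumes "0 < l"
  shows "measure_pmf.prob (poisson_pmf l)
             {k. \<bar>real k - measure_pmf.expectation (poisson_pmf l) real\<bar>
                   \<le> sqrt (measure_pmf.variance (poisson_pmf l) real)}
       = (\<Sum>k\<in>{k. \<bar>real k - l\<bar> \<le> sqrt l}. PP l k)"
  apply (subst poisson_variance[OF assms])
  apply (subst poisson_expectation[OF assms])
  using assms finite_set_sd[of l]
  by (simp add: measure_measure_pmf_finite PP_def)

lemma near1: assumes "1 < l" "l < 3/2" shows "{k::nat. \<bar>real k - l\<bar> \<le> sqrt l} = {1,2}"
proof -
  have s1: "1 < sqrt l" using assms by simp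
  have "sqrt l * 1 < sqrt l * sqrt l" using s1 by (intro mult_strict_left_mono) auto
  then have s2: "sqrt l < l" using assms by simp
  show ?thesis
  proof (rule set_eqI, rule iffI)
    fix k :: nat assume "k \<in> {k::nat. \<bar>real k - l\<bar> \<le> sqrt l}"
    then have k: "\<bar>real k - l\<bar> \<le> sqrt l" by simp
    have "k \<noteq> 0" using k s2 assms by auto
    moreover have "\<not> k \<ge> 3"
    proof
      assume "k \<ge> 3" then have "real k \<ge> 3" by simp
      then show False using k assms s2 by linarith
    qed
    ultimately show "k \<in> {1,2}" by auto
  next
    fix k :: nat assume "k \<in> {1,2}"
    then have "real k = 1 \<or> real k = 2" by auto
    then have "\<bar>real k - l\<bar> \<le> sqrt l" using assms s1 by (elim disjE) linarith+
    then show "k \<in> {k::nat. \<bar>real k - l\<bar> \<le> sqrt l}" by simp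
  qed
qed

lemma PP_nonneg: "0 < l \<Longrightarrow> 0 \<le> PP l k"
  by (simp add: PP_def)



lemma PP_pos: "0 < t \<Longrightarrow> 0 < PP t k" by (simp add: PP_def)

lemma PP_deriv0: "DERIV (\<lambda>t. PP t 0) t :> - PP t 0"
  unfolding PP_def by (auto intro!: derivative_eq_intros)

lemma PP_derivS: "DERIV (\<lambda>t. PP t (Suc k)) t :> PP t k - PP t (Suc k)"
  unfolding PP_def
  apply (auto intro!: derivative_eq_intros simp: fact_Suc field_simps simp del: of_nat_Suc)
  apply (cases k)
   apply (auto simp: algebra_simps)
  done

definition Fc :: "nat \<Rightarrow> real \<Rightarrow> real" where "Fc K t = (\<Sum>k\<le>K. PP t k)"

lemma Fc_deriv: "DERIV (Fc K) t :> - PP t K"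
proof (induction K)
  case 0
  then show ?case using PP_deriv0 by (simp add: Fc_def)
next
  case (Suc K)
  have "Fc (Suc K) = (\<lambda>t. Fc K t + PP t (Suc K))"
    by (auto simp: Fc_def fun_eq_iff)
  moreover have "DERIV (\<lambda>t. Fc K t + PP t (Suc K)) t :> - PP t K + (PP t K - PP t (Suc K))"
    by (intro DERIV_add Suc PP_derivS)
  ultimately show ?case by simp
qed

definition G :: "nat \<Rightarrow> nat \<Rightarrow> real \<Rightarrow> real" where "G K1 K2 t = (\<Sum>k\<in>{K1..K2}. PP t k)"

lemma G_eq: assumes "K1 \<le> K2" shows "G K1 K2 t = Fc K2 t - (if K1 = 0 then 0 else Fc (K1 - 1) t)"
proof (cases "K1 = 0")
  case True then show ?thesis by (simp add: G_def Fc_def atLeast0AtMost)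
next
  case False
  then have "{..K2} = {..K1 - 1} \<union> {K1..K2}" using assms by auto
  moreover have "{..K1 - 1} \<inter> {K1..K2} = {}" using False by auto
  ultimately have "Fc K2 t = Fc (K1 - 1) t + G K1 K2 t"
    unfolding Fc_def G_def by (simp add: sum.union_disjoint)
  then show ?thesis using False by simp
qed

definition GD :: "nat \<Rightarrow> nat \<Rightarrow> real \<Rightarrow> real" where
  "GD K1 K2 t = (if K1 = 0 then 0 else PP t (K1 - 1)) - PP t K2"

lemma G_deriv: assumes "K1 \<le> K2" shows "DERIV (G K1 K2) t :> GD K1 K2 t"
proof -
  have e: "G K1 K2 = (\<lambda>t. Fc K2 t - (if K1 = 0 then 0 else Fc (K1 - 1) t))"
    using G_eq[OF assms] by (auto simp: fun_eq_iff)
  show ?thesis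
  proof (cases "K1 = 0")
    case True
    then show ?thesis unfolding e GD_def using Fc_deriv[of K2 t] by simp
  next
    case False
    have "DERIV (\<lambda>t. Fc K2 t - Fc (K1 - 1) t) t :> - PP t K2 - - PP t (K1 - 1)"
      by (intro DERIV_diff Fc_deriv)
    then show ?thesis unfolding e GD_def using False by simp
  qed
qed

lemma GD_sign:
  assumes "K1 \<le> K2" "0 < t1" "t1 \<le> t2" "0 \<le> GD K1 K2 t2"
  shows "0 \<le> GD K1 K2 t1"
proof (cases "K1 = 0")
  case True
  then show ?thesis using assms PP_pos[of t2 K2] by (simp add: GD_def)
next
  case False
  define j where "j = K1 - 1"
  define d where "d = K2 - j"
  have K2: "K2 = j + d" using assms False unfolding j_def d_def by auto
  have PPK2: "PP t K2 = PP t j * (t ^ d * (fact j / fact K2))" if "0 < t" for t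
    using that unfolding PP_def K2 by (simp add: power_add field_simps)
  have t2pos: "0 < t2" using assms by simp
  have "PP t2 K2 \<le> PP t2 j" using assms(4) False unfolding GD_def j_def by simp
  then have "PP t2 j * (t2 ^ d * (fact j / fact K2)) \<le> PP t2 j"
    using PPK2[OF t2pos] by simp
  then have "t2 ^ d * (fact j / fact K2) \<le> 1"
    using PP_pos[OF t2pos, of j] mult_left_le_imp_le[of "PP t2 j" "t2 ^ d * (fact j / fact K2)" 1] by simp
  moreover have "t1 ^ d \<le> t2 ^ d" using assms by (intro power_mono) auto
  moreover have "t1 ^ d * (fact j / fact K2) \<le> t2 ^ d * (fact j / fact K2)"
    using calculation(2) by (intro mult_right_mono) auto
  ultimately have "t1 ^ d * (fact j / fact K2) \<le> 1"
    by linarith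
  then have "PP t1 j * (t1 ^ d * (fact j / fact K2)) \<le> PP t1 j * 1"
    using PP_pos[OF assms(2), of j] by (intro mult_left_mono) auto
  then have "PP t1 K2 \<le> PP t1 j"
    using PPK2[OF assms(2)] by simp
  then show ?thesis using False unfolding GD_def j_def by simp
qed

lemma G_quasi:
  assumes "0 < x" "x \<le> t" "t \<le> y" "K1 \<le> K2"
  shows "min (G K1 K2 x) (G K1 K2 y) \<le> G K1 K2 t"
proof (cases "0 \<le> GD K1 K2 t")
  case True
  have "G K1 K2 x \<le> G K1 K2 t"
  proof (rule deriv_nonneg_imp_mono[of x t "G K1 K2" "GD K1 K2"])
    show "\<And>s. s \<in> {x..t} \<Longrightarrow> (G K1 K2 has_real_derivative GD K1 K2 s) (at s)"
      using G_deriv[OF assms(4)] by blast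
    show "\<And>s. s \<in> {x..t} \<Longrightarrow> 0 \<le> GD K1 K2 s"
      using GD_sign[OF assms(4) _ _ True] assms by auto
  qed (use assms in auto)
  then show ?thesis by simp
next
  case False
  have neg: "GD K1 K2 s \<le> 0" if "s \<in> {t..y}" for s
  proof (rule ccontr)
    assume "\<not> GD K1 K2 s \<le> 0"
    then have "0 \<le> GD K1 K2 s" by simp
    from GD_sign[OF assms(4) _ _ this, of t] that assms False show False by auto
  qed
  have "(\<lambda>s. - G K1 K2 s) t \<le> (\<lambda>s. - G K1 K2 s) y"
  proof (rule deriv_nonneg_imp_mono[of t y _ "\<lambda>s. - GD K1 K2 s"])
    show "\<And>s. s \<in> {t..y} \<Longrightarrow> ((\<lambda>s. - G K1 K2 s) has_real_derivative - GD K1 K2 s) (at s)"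
      using G_deriv[OF assms(4)] by (blast intro: DERIV_minus)
    show "\<And>s. s \<in> {t..y} \<Longrightarrow> 0 \<le> - GD K1 K2 s" using neg by simp
  qed (use assms in auto)
  then show ?thesis by simp
qed

definition FF :: "real \<Rightarrow> real" where "FF l = (\<Sum>k\<in>{k. \<bar>real k - l\<bar> \<le> sqrt l}. PP l k)"

lemma FF_ge_G:
  assumes "0 < l" "\<And>k. K1 \<le> k \<Longrightarrow> k \<le> K2 \<Longrightarrow> \<bar>real k - l\<bar> \<le> sqrt l"
  shows "G K1 K2 l \<le> FF l"
  unfolding G_def FF_def
  by (rule sum_mono2[OF finite_set_sd]) (use assms in \<open>auto intro: PP_nonneg\<close>)

lemma sqrt_shift_mono:
  assumes "1/4 \<le> l" "l \<le> y"
  shows "l - sqrt l \<le> y - sqrt y"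
proof -
  have "(1/2::real)^2 \<le> l" "(1/2::real)^2 \<le> y" using assms by (simp_all add: power2_eq_square)
  then have a: "1/2 \<le> sqrt l" and b: "1/2 \<le> sqrt y" by (simp_all only: real_le_rsqrt)
  have c: "sqrt l \<le> sqrt y" using assms by simp
  have "y - l = (sqrt y - sqrt l) * (sqrt y + sqrt l)"
    using assms by (simp add: algebra_simps)
  also have "\<dots> \<ge> (sqrt y - sqrt l) * 1"
    using a b c by (intro mult_left_mono; linarith)
  finally show ?thesis by simp
qed

lemma cell:
  assumes x: "1/4 \<le> x" and xy: "x \<le> y" and K: "K1 \<le> K2"
    and c2: "real K2 \<le> x \<or> (real K2 - x)^2 \<le> x"
    and c1: "y \<le> real K1 \<or> (y - real K1)^2 \<le> y"
    and gx: "c \<le> G K1 K2 x" and gy: "c \<le> G K1 K2 y"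
    and l: "x \<le> l" "l \<le> y"
  shows "c \<le> FF l"
proof -
  have lpos: "0 < l" using x l by simp
  have A: "real K2 - x \<le> sqrt x"
    using c2 proof
    assume "real K2 \<le> x" then show ?thesis using real_sqrt_ge_zero[of x] x by linarith
  next
    assume "(real K2 - x)^2 \<le> x" then show ?thesis by (rule real_le_rsqrt)
  qed
  have B: "y - real K1 \<le> sqrt y"
    using c1 proof
    assume "y \<le> real K1" then show ?thesis using real_sqrt_ge_zero[of y] x xy by linarith
  next
    assume "(y - real K1)^2 \<le> y" then show ?thesis by (rule real_le_rsqrt)
  qed
  have sx: "sqrt x \<le> sqrt l" using l by simp
  have mono: "l - sqrt l \<le> y - sqrt y" using sqrt_shift_mono[of l y] x l by simp
  have "\<bar>real k - l\<bar> \<le> sqrt l" if "K1 \<le> k" "k \<le> K2" for k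
  proof -
    have k: "real k \<le> real K2" "real K1 \<le> real k" using that by auto
    show ?thesis unfolding abs_le_iff using A B sx mono l k by (intro conjI; linarith)
  qed
  then have "G K1 K2 l \<le> FF l" by (intro FF_ge_G lpos) auto
  moreover have "min (G K1 K2 x) (G K1 K2 y) \<le> G K1 K2 l"
    using x l K by (intro G_quasi) auto
  ultimately show ?thesis using gx gy by linarith
qed



fun chainok :: "real \<Rightarrow> nat \<Rightarrow> real list \<Rightarrow> bool" where
  "chainok x k [] = True"
| "chainok x k [_] = True"
| "chainok x k (a # b # r) = (b \<le> a * x / real (Suc k) \<and> chainok x (Suc k) (b # r))"

lemma chain_lb:
  "chainok x k Ls \<Longrightarrow> 0 \<le> x \<Longrightarrow> Ls \<noteq> [] \<Longrightarrow> hd Ls \<le> x ^ k / fact k \<Longrightarrow> i < length Ls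
    \<Longrightarrow> Ls ! i \<le> x ^ (k + i) / fact (k + i)"
proof (induction x k Ls arbitrary: i rule: chainok.induct)
  case (1 x k)
  then show ?case by simp
next
  case (2 x k a)
  then show ?case by simp
next
  case (3 x k a b r)
  show ?case
  proof (cases i)
    case 0
    then show ?thesis using 3 by simp
  next
    case (Suc i')
    have b: "b \<le> a * x / real (Suc k)" using 3 by simp
    have "a * x / real (Suc k) \<le> x ^ k / fact k * x / real (Suc k)"
      using 3 by (intro divide_right_mono mult_right_mono) auto
    also have "\<dots> = x ^ Suc k / fact (Suc k)"
      by (simp add: fact_Suc field_simps del: of_nat_Suc)
    finally have "hd (b # r) \<le> x ^ Suc k / fact (Suc k)" using b by simp
    then have "(b # r) ! i' \<le> x ^ (Suc k + i') / fact (Suc k + i')"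
      using 3 Suc by (intro 3(1)) auto
    then show ?thesis using Suc by simp
  qed
qed

lemma chain_sum:
  assumes "chainok x 0 Ls" "0 \<le> x" "Ls \<noteq> []" "hd Ls = 1" "K1 \<le> K2" "K2 < length Ls"
  shows "sum_list (take (Suc K2 - K1) (drop K1 Ls)) \<le> (\<Sum>k\<in>{K1..K2}. x ^ k / fact k)"
proof -
  have len: "length (take (Suc K2 - K1) (drop K1 Ls)) = Suc K2 - K1" using assms by simp
  have eq: "take (Suc K2 - K1) (drop K1 Ls) = map (\<lambda>i. Ls ! (K1 + i)) [0..<Suc K2 - K1]"
    using assms by (intro nth_equalityI) auto
  have "sum_list (take (Suc K2 - K1) (drop K1 Ls)) = (\<Sum>i = 0..<Suc K2 - K1. Ls ! (K1 + i))"
    unfolding eq by (simp add: interv_sum_list_conv_sum_set_nat)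
  also have "\<dots> \<le> (\<Sum>i = 0..<Suc K2 - K1. x ^ (K1 + i) / fact (K1 + i))"
    using assms chain_lb[of x 0 Ls] by (intro sum_mono) auto
  also have "\<dots> = (\<Sum>k\<in>{K1..K2}. x ^ k / fact k)"
    using assms(5) by (subst sum.atLeastAtMost_shift_0) (auto simp: atLeastLessThanSuc_atLeastAtMost comp_def Suc_diff_le)
  finally show ?thesis .
qed

lemma e_lo: "2718281828 / 1000000000 \<le> exp (1::real)"
  using e_approx_32 by (simp add: abs_if split: if_split_asm)

lemma e_hi: "exp (1::real) \<le> 2718281829 / 1000000000"
  using e_approx_32 by (simp add: abs_if split: if_split_asm)

lemma check_G:
  assumes x: "0 \<le> x" and B: "exp x \<le> B" and ch: "chainok x 0 Ls" "Ls \<noteq> []" "hd Ls = 1"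
    and K: "K1 \<le> K2" "K2 < length Ls"
    and num: "3/2 * B \<le> 2718281828 / 1000000000 * sum_list (take (Suc K2 - K1) (drop K1 Ls))"
  shows "3/2 * exp (-1) \<le> G K1 K2 x"
proof -
  define S where "S = (\<Sum>k\<in>{K1..K2}. x ^ k / fact k)"
  have S0: "0 \<le> S" unfolding S_def using x by (intro sum_nonneg) auto
  have sl: "sum_list (take (Suc K2 - K1) (drop K1 Ls)) \<le> S"
    unfolding S_def using chain_sum[OF ch(1) x ch(2) ch(3) K] .
  have "3/2 * exp x \<le> 3/2 * B" using B by simp
  also have "\<dots> \<le> 2718281828 / 1000000000 * sum_list (take (Suc K2 - K1) (drop K1 Ls))" by (rule num)
  also have "\<dots> \<le> 2718281828 / 1000000000 * S" using sl by simp
  also have "\<dots> \<le> exp 1 * S" using e_lo S0 by (intro mult_right_mono) auto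
  finally have *: "3/2 * exp x \<le> exp 1 * S" .
  have G: "G K1 K2 x = exp (-x) * S"
    unfolding G_def S_def PP_def by (simp add: sum_distrib_left mult_ac)
  have "3/2 * exp (-1) = exp (-x) * (3/2 * exp x) * exp (-1)"
    by (simp add: exp_minus field_simps)
  also have "\<dots> \<le> exp (-x) * (exp 1 * S) * exp (-1)"
    using * by (intro mult_right_mono mult_left_mono) auto
  also have "\<dots> = G K1 K2 x" using G by (simp add: exp_minus field_simps)
  finally show ?thesis .
qed

fun upchain :: "real \<Rightarrow> real list \<Rightarrow> bool" where
  "upchain r [] = True"
| "upchain r [_] = True"
| "upchain r (a # b # t) = (a * r \<le> b \<and> upchain r (b # t))"

lemma upchain_lb:
  "upchain r Ls \<Longrightarrow> exp z \<le> r \<Longrightarrow> Ls \<noteq> [] \<Longrightarrow> exp (real k * z) \<le> hd Ls \<Longrightarrow> i < length Ls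
    \<Longrightarrow> exp (real (k + i) * z) \<le> Ls ! i"
proof (induction r Ls arbitrary: i k rule: upchain.induct)
  case (1 r)
  then show ?case by simp
next
  case (2 r a)
  then show ?case by simp
next
  case (3 r a b t)
  show ?case
  proof (cases i)
    case 0
    then show ?thesis using 3 by simp
  next
    case (Suc i')
    have "exp (real (Suc k) * z) = exp (real k * z) * exp z"
      by (simp add: distrib_right exp_add)
    also have "\<dots> \<le> a * r"
      using 3 by (intro mult_mono) (auto intro: order_trans[OF exp_ge_zero])
    also have "\<dots> \<le> b" using 3 by simp
    finally have "exp (real (Suc k + i') * z) \<le> (b # t) ! i'"
      using 3 Suc by (intro 3(1)) auto
    then show ?thesis using Suc by simp
  qed
qed

lemma upchain_lb0:
  "upchain r Ls \<Longrightarrow> exp z \<le> r \<Longrightarrow> Ls \<noteq> [] \<Longrightarrow> 1 \<le> hd Ls \<Longrightarrow> i < length Ls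
    \<Longrightarrow> exp (real i * z) \<le> Ls ! i"
  using upchain_lb[of r Ls z 0 i] by simp

lemma exp_64: "exp (1/64::real) \<le> 4161/4096"
proof -
  have "exp (1/64::real) \<le> 1 + 1/64 + (1/64)^2" by (rule exp_bound) auto
  moreover have "(1::real) + 1/64 + (1/64)^2 = 4161/4096" by (simp add: power2_eq_square)
  ultimately show ?thesis by linarith
qed

lemma exp_grid:
  assumes "upchain (2718281829 / 1000000000) En" "En \<noteq> []" "1 \<le> hd En" "n < length En"
    and "upchain (4161/4096) Ej" "Ej \<noteq> []" "1 \<le> hd Ej" "j < length Ej"
  shows "exp (real (64 * n + j) / 64) \<le> En ! n * Ej ! j"
proof -
  have a: "exp (real n * 1) \<le> En ! n" using upchain_lb0[OF assms(1) e_hi assms(2-4)] .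
  have b: "exp (real j * (1/64)) \<le> Ej ! j" using upchain_lb0[OF assms(5) exp_64 assms(6-8)] .
  have "exp (real (64 * n + j) / 64) = exp (real n * 1) * exp (real j * (1/64))"
    by (simp add: exp_add[symmetric] field_simps)
  also have "\<dots> \<le> En ! n * Ej ! j" using a b by (intro mult_mono) (auto intro: order_trans[OF exp_ge_zero])
  finally show ?thesis .
qed


definition EnL :: "real list" where "EnL = [1, 271828183/100000000, 738905611/100000000, 20085537/1000000, 545981503/10000000, 3710329/25000, 403428797/1000000, 109663317/100000, 149047901/50000, 405154201/50000, 220264661/10000, 299370713/5000, 81377397/500, 2212067/5, 120260431/100, 65380349/20, 444305537/50, 120774767/5, 65659971, 178482307, 485165212, 1318815780, 3584912980, 9744803820, 26489123200, 72004902300, 195729618000, 532048265000, 1446257140000, 3931334510000, 10686475200000, 29048851400000, 78962965000000, 214643593000000, 583461779000000, 1586013560000000, 4311231850000000]"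
definition EjL :: "real list" where "EjL = [1, 20317383/20000000, 103199013/100000000, 104836693/100000000, 53250181/50000000, 3380951/3125000, 54953661/50000000, 111651457/100000000, 11342327/10000000, 144029/125000, 58525847/50000000, 29727301/25000000, 120796191/100000000, 122713123/100000000, 4986419/4000000, 12663873/10000000, 64324189/50000000, 65344959/50000000, 26552771/20000000, 8429419/6250000, 137010987/100000000, 69592617/50000000, 28278797/20000000, 143637787/100000000, 36479299/25000000, 148232777/100000000, 9411569/6250000, 152974761/100000000, 155402339/100000000, 157868441/100000000, 80186839/50000000, 162918671/100000000, 165504051/100000000, 168130459/100000000, 34159709/20000000, 43377243/25000000, 176262411/100000000, 22382443/12500000, 90950533/50000000, 1154923/625000, 93860051/50000000, 190699059/100000000, 19372529/10000000, 24599943/12500000, 24990323/12500000, 12693449/6250000, 206318131/100000000, 209592223/100000000, 831712/390625, 108148551/50000000, 13733097/6250000, 27902059/12500000, 113379363/50000000, 230357193/100000000, 58503191/25000000, 118863173/50000000, 241498859/100000000, 245331239/100000000, 49844887/20000000, 253179413/100000000, 257197153/100000000, 261278651/100000000, 265424919/100000000, 53927397/20000000]"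
lemma EnL_ok: "upchain (2718281829 / 1000000000) EnL" by (simp add: EnL_def)
lemma EjL_ok: "upchain (4161/4096) EjL" by (simp add: EjL_def)
lemma exp_at: assumes "a < 2368" shows "exp (real a / 64) \<le> EnL ! (a div 64) * EjL ! (a mod 64)"
proof -
  have "exp (real (64 * (a div 64) + a mod 64) / 64) \<le> EnL ! (a div 64) * EjL ! (a mod 64)"
    using assms by (intro exp_grid EnL_ok EjL_ok) (auto simp: EnL_def EjL_def)
  then show ?thesis by simp
qed
definition cc :: real where "cc = 3/2 * exp (-1)"
definition L16 :: "real list" where "L16 = [1]"
lemma ch16: "chainok (1/4) 0 L16" by (simp add: L16_def)
lemma ex16: "exp (1/4) \<le> EnL ! 0 * EjL ! 16" using exp_at[of 16] by simp
definition L25 :: "real list" where "L25 = [1, 25/64]"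
lemma ch25: "chainok (25/64) 0 L25" by (simp add: L25_def)
lemma ex25: "exp (25/64) \<le> EnL ! 0 * EjL ! 25" using exp_at[of 25] by simp
definition L109 :: "real list" where "L109 = [1, 21289/12500, 145031/100000, 823353/1000000]"
lemma ch109: "chainok (109/64) 0 L109" by (simp add: L109_def)
lemma ex109: "exp (109/64) \<le> EnL ! 1 * EjL ! 45" using exp_at[of 109] by simp
definition L157 :: "real list" where "L157 = [1, 7666/3125, 30089/10000, 6151/2500, 150891/100000]"
lemma ch157: "chainok (157/64) 0 L157" by (simp add: L157_def)
lemma ex157: "exp (157/64) \<le> EnL ! 2 * EjL ! 29" using exp_at[of 157] by simp
definition L167 :: "real list" where "L167 = [1, 260937/100000, 340441/100000, 18507/6250, 96583/50000]"
lemma ch167: "chainok (167/64) 0 L167" by (simp add: L167_def)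
lemma ex167: "exp (167/64) \<le> EnL ! 2 * EjL ! 39" using exp_at[of 167] by simp
definition L206 :: "real list" where "L206 = [1, 103/32, 518017/100000, 555789/100000, 111809/25000, 71977/25000]"
lemma ch206: "chainok (103/32) 0 L206" by (simp add: L206_def)
lemma ex206: "exp (103/32) \<le> EnL ! 3 * EjL ! 14" using exp_at[of 206] by simp
definition L256 :: "real list" where "L256 = [1, 4, 8, 53333/5000, 53333/5000, 53333/6250, 113777/20000]"
lemma ch256: "chainok (4) 0 L256" by (simp add: L256_def)
lemma ex256: "exp (4) \<le> EnL ! 4 * EjL ! 0" using exp_at[of 256] by simp
definition L308 :: "real list" where "L308 = [1, 77/16, 579/50, 92881/5000, 111747/5000, 26889/1250, 172537/10000, 118619/10000]"
lemma ch308: "chainok (77/16) 0 L308" by (simp add: L308_def)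
lemma ex308: "exp (77/16) \<le> EnL ! 4 * EjL ! 52" using exp_at[of 308] by simp
definition L339 :: "real list" where "L339 = [1, 529687/100000, 35071/2500, 30961/1250, 327993/10000, 347467/10000, 76687/2500, 46423/2000]"
lemma ch339: "chainok (339/64) 0 L339" by (simp add: L339_def)
lemma ex339: "exp (339/64) \<le> EnL ! 5 * EjL ! 19" using exp_at[of 339] by simp
definition L361 :: "real list" where "L361 = [1, 282031/50000, 159083/10000, 299109/10000, 42179/1000, 475831/10000, 44733/1000, 18023/500, 31769/1250]"
lemma ch361: "chainok (361/64) 0 L361" by (simp add: L361_def)
lemma ex361: "exp (361/64) \<le> EnL ! 5 * EjL ! 41" using exp_at[of 361] by simp
definition L414 :: "real list" where "L414 = [1, 207/32, 209223/10000, 451137/10000, 729573/10000, 188777/2000, 50881/500, 940389/10000, 95049/1250, 546531/10000]"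
lemma ch414: "chainok (207/32) 0 L414" by (simp add: L414_def)
lemma ex414: "exp (207/32) \<le> EnL ! 6 * EjL ! 30" using exp_at[of 414] by simp
definition L419 :: "real list" where "L419 = [1, 654687/100000, 214307/10000, 5846/125, 38273/500, 100227/1000, 54681/500, 51141/500, 418517/5000, 152221/2500]"
lemma ch419: "chainok (419/64) 0 L419" by (simp add: L419_def)
lemma ex419: "exp (419/64) \<le> EnL ! 6 * EjL ! 35" using exp_at[of 419] by simp
definition L468 :: "real list" where "L468 = [1, 117/16, 267363/10000, 651697/10000, 59569/500, 174239/1000, 212353/1000, 221833/1000, 202769/1000, 164749/1000, 15059/125]"
lemma ch468: "chainok (117/16) 0 L468" by (simp add: L468_def)
lemma ex468: "exp (117/16) \<le> EnL ! 7 * EjL ! 20" using exp_at[of 468] by simp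
definition L498 :: "real list" where "L498 = [1, 249/32, 302739/10000, 785229/10000, 152751/1000, 118859/500, 30829/100, 342697/1000, 166663/500, 72047/250, 112123/500]"
lemma ch498: "chainok (249/32) 0 L498" by (simp add: L498_def)
lemma ex498: "exp (249/32) \<le> EnL ! 7 * EjL ! 50" using exp_at[of 498] by simp
definition L522 :: "real list" where "L522 = [1, 261/32, 166311/5000, 226079/2500, 36879/200, 150397/500, 408891/1000, 476431/1000, 60717/125, 220099/500, 89759/250, 266217/1000]"
lemma ch522: "chainok (261/32) 0 L522" by (simp add: L522_def)
lemma ex522: "exp (261/32) \<le> EnL ! 8 * EjL ! 10" using exp_at[of 522] by simp
definition L576 :: "real list" where "L576 = [1, 9, 81/2, 243/2, 2187/8, 19683/40, 92264/125, 949001/1000, 53381/50, 53381/50, 480429/500, 196539/250, 589617/1000]"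
lemma ch576: "chainok (9) 0 L576" by (simp add: L576_def)
lemma ex576: "exp (9) \<le> EnL ! 9 * EjL ! 0" using exp_at[of 576] by simp
definition L632 :: "real list" where "L632 = [1, 79/8, 243789/5000, 80247/500, 396219/1000, 195633/250, 128791/100, 181687/100, 224269/100, 61518/25, 60749/25, 54536/25, 89757/50, 136361/100]"
lemma ch632: "chainok (79/8) 0 L632" by (simp add: L632_def)
lemma ex632: "exp (79/8) \<le> EnL ! 9 * EjL ! 56" using exp_at[of 632] by simp
definition L652 :: "real list" where "L652 = [1, 163/16, 20757/400, 88109/500, 89761/200, 22861/25, 38816/25, 56491/25, 287751/100, 162859/50, 13273/4, 61463/20, 260897/100, 51113/25]"
lemma ch652: "chainok (163/16) 0 L652" by (simp add: L652_def)
lemma ex652: "exp (163/16) \<le> EnL ! 10 * EjL ! 12" using exp_at[of 652] by simp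
definition L687 :: "real list" where "L687 = [1, 107343/10000, 57613/1000, 103073/500, 138303/250, 118767/100, 212481/100, 65167/20, 109301/25, 130364/25, 11195/2, 546233/100, 244311/50, 80693/20, 309353/100]"
lemma ch687: "chainok (687/64) 0 L687" by (simp add: L687_def)
lemma ex687: "exp (687/64) \<le> EnL ! 10 * EjL ! 47" using exp_at[of 687] by simp
definition L727 :: "real list" where "L727 = [1, 113593/10000, 161293/2500, 244291/1000, 173437/250, 15761/10, 298391/100, 484219/100, 687553/100, 216949/25, 492881/50, 50898/5, 192723/20, 210501/25, 170797/25]"
lemma ch727: "chainok (727/64) 0 L727" by (simp add: L727_def)
lemma ex727: "exp (727/64) \<le> EnL ! 11 * EjL ! 23" using exp_at[of 727] by simp
definition L743 :: "real list" where "L743 = [1, 116093/10000, 673883/10000, 130389/500, 756867/1000, 35147/20, 85007/25, 56393/10, 818359/100, 52781/5, 12255, 64669/5, 125127/10, 55871/5, 92661/10, 717157/100]"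
lemma ch743: "chainok (743/64) 0 L743" by (simp add: L743_def)
lemma ex743: "exp (743/64) \<le> EnL ! 11 * EjL ! 39" using exp_at[of 743] by simp
definition L799 :: "real list" where "L799 = [1, 124843/10000, 779293/10000, 324299/1000, 25304/25, 252723/100, 131462/25, 46892/5, 73177/5, 40603/2, 253451/10, 143826/5, 149631/5, 143696/5, 256279/10, 106649/5, 16643]"
lemma ch799: "chainok (799/64) 0 L799" by (simp add: L799_def)
lemma ex799: "exp (799/64) \<le> EnL ! 12 * EjL ! 31" using exp_at[of 799] by simp
definition L802 :: "real list" where "L802 = [1, 7832/625, 392579/5000, 327967/1000, 20549/20, 64376/25, 537807/100, 96277/10, 75404/5, 209979/10, 263129/10, 299757/10, 313027/10, 301739/10, 270083/10, 225631/10, 88357/5]"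
lemma ch802: "chainok (401/32) 0 L802" by (simp add: L802_def)
lemma ex802: "exp (401/32) \<le> EnL ! 12 * EjL ! 34" using exp_at[of 802] by simp
definition L855 :: "real list" where "L855 = [1, 133593/10000, 892359/10000, 198689/500, 66359/50, 70921/20, 15791/2, 75342/5, 25163, 373513/10, 49899, 606017/10, 674667/10, 693317/10, 661591/10, 589229/10, 491983/10, 193311/5]"
lemma ch855: "chainok (855/64) 0 L855" by (simp add: L855_def)
lemma ex855: "exp (855/64) \<le> EnL ! 13 * EjL ! 23" using exp_at[of 855] by simp
definition L876 :: "real list" where "L876 = [1, 219/16, 468369/5000, 213693/500, 73123/50, 100087/25, 913293/100, 178581/10, 30554, 92935/2, 636023/10, 395707/5, 451353/5, 190089/2, 929229/10, 847921/10, 725369/10, 292014/5]"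
lemma ch876: "chainok (219/16) 0 L876" by (simp add: L876_def)
lemma ex876: "exp (219/16) \<le> EnL ! 13 * EjL ! 44" using exp_at[of 876] by simp
definition L911 :: "real list" where "L911 = [1, 142343/10000, 25327/250, 96137/200, 42764/25, 19479/4, 115529/10, 117463/5, 418003/10, 330556/5, 941051/10, 121775, 144449, 158164, 160811, 152602, 135762, 113675, 89894]"
lemma ch911: "chainok (911/64) 0 L911" by (simp add: L911_def)
lemma ex911: "exp (911/64) \<le> EnL ! 14 * EjL ! 15" using exp_at[of 911] by simp
definition L950 :: "real list" where "L950 = [1, 148437/10000, 13771/125, 272551/500, 202283/100, 600527/100, 148567/10, 315041/10, 292274/5, 482049/5, 143108, 193114, 238877, 272756, 289194, 286181, 265499, 231823, 191173]"
lemma ch950: "chainok (475/32) 0 L950" by (simp add: L950_def)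
lemma ex950: "exp (475/32) \<le> EnL ! 14 * EjL ! 54" using exp_at[of 950] by simp
definition L968 :: "real list" where "L968 = [1, 121/8, 57191/500, 23067/40, 43611/20, 164904/25, 83139/5, 359279/10, 679261/10, 114153, 172656, 237402, 299225, 348136, 376111, 379245, 358505, 318964, 268018, 213356]"
lemma ch968: "chainok (121/8) 0 L968" by (simp add: L968_def)
lemma ex968: "exp (121/8) \<le> EnL ! 15 * EjL ! 8" using exp_at[of 968] by simp
definition L1024 :: "real list" where "L1024 = [1, 16, 128, 341333/500, 136533/50, 873811/100, 116508/5, 266304/5, 106521, 189370, 302992, 440715, 587620, 723224, 826541, 881643, 881643, 829781, 737583, 621122, 496897]"
lemma ch1024: "chainok (16) 0 L1024" by (simp add: L1024_def)
lemma ex1024: "exp (16) \<le> EnL ! 16 * EjL ! 0" using exp_at[of 1024] by simp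
definition L1081 :: "real list" where "L1081 = [1, 84453/5000, 71323/500, 401563/500, 84783/25, 114563/10, 161253/5, 778189/10, 164301, 308349, 520820, 799725, 1125650, 1462530, 1764500, 1986900, 2097490, 2083990, 1955540, 1738430, 1468150, 1180850]"
lemma ch1081: "chainok (1081/64) 0 L1081" by (simp add: L1081_def)
lemma ex1081: "exp (1081/64) \<le> EnL ! 16 * EjL ! 57" using exp_at[of 1081] by simp
definition L1096 :: "real list" where "L1096 = [1, 137/8, 18329/125, 104628/125, 7167/2, 61367/5, 350303/10, 856991/10, 183449, 349062, 597768, 930616, 1328060, 1749460, 2139960, 2443120, 2614900, 2634120, 2506070, 2258760, 1934060, 1577170]"
lemma ch1096: "chainok (137/8) 0 L1096" by (simp add: L1096_def)
lemma ex1096: "exp (137/8) \<le> EnL ! 17 * EjL ! 8" using exp_at[of 1096] by simp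
definition L1139 :: "real list" where "L1139 = [1, 11123/625, 158363/1000, 187891/200, 104496/25, 74388/5, 441291/10, 112194, 249587, 493540, 878346, 1421070, 2107550, 2885210, 3667690, 4351560, 4840260, 5067140, 5009950, 4692700, 4175760, 3538830, 2862730]"
lemma ch1139: "chainok (1139/64) 0 L1139" by (simp add: L1139_def)
lemma ex1139: "exp (1139/64) \<le> EnL ! 17 * EjL ! 51" using exp_at[of 1139] by simp
definition L1169 :: "real list" where "L1169 = [1, 11416/625, 20852/125, 50783/50, 463791/100, 84714/5, 257892/5, 134587, 307289, 623647, 1139130, 1891530, 2879160, 4045350, 5277910, 6426950, 7337010, 7883230, 7999560, 7690360, 7023460, 6108940, 5071980]"
lemma ch1169: "chainok (1169/64) 0 L1169" by (simp add: L1169_def)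
lemma ex1169: "exp (1169/64) \<le> EnL ! 18 * EjL ! 17" using exp_at[of 1169] by simp
definition L1196 :: "real list" where "L1196 = [1, 299/16, 174611/1000, 27192/25, 10163/2, 189921/10, 295762/5, 157915, 368879, 765936, 1431340, 2431650, 3786780, 5443490, 7266080, 9052320, 10572800, 11622300, 12066200, 11867700, 11088800, 9867710, 8381940, 6810320]"
lemma ch1196: "chainok (299/16) 0 L1196" by (simp add: L1196_def)
lemma ex1196: "exp (299/16) \<le> EnL ! 18 * EjL ! 44" using exp_at[of 1196] by simp
definition L1241 :: "real list" where "L1241 = [1, 96953/5000, 187997/1000, 30378/25, 147262/25, 22844, 147653/2, 204505, 495684, 1067950, 2070820, 3650400, 5898620, 8798300, 12186000, 15752900, 19091100, 21775700, 23458000, 23940200, 23210700, 21431900, 18889900, 15925500]"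
lemma ch1241: "chainok (1241/64) 0 L1241" by (simp add: L1241_def)
lemma ex1241: "exp (1241/64) \<le> EnL ! 19 * EjL ! 25" using exp_at[of 1241] by simp
definition L1253 :: "real list" where "L1253 = [1, 195781/10000, 191651/1000, 31268/25, 153042/25, 119851/5, 391076/5, 218758, 535358, 1164580, 2280020, 4058040, 6620730, 9970880, 13943600, 18199300, 22269200, 25646400, 27894900, 28743600, 28137200, 26232000, 23344200, 19871100, 16209900]"
lemma ch1253: "chainok (1253/64) 0 L1253" by (simp add: L1253_def)
lemma ex1253: "exp (1253/64) \<le> EnL ! 19 * EjL ! 37" using exp_at[of 1253] by simp
definition L1311 :: "real list" where "L1311 = [1, 204843/10000, 52451/250, 35814/25, 733627/100, 300557/10, 102612, 300277, 768873, 1749980, 3584720, 6675520, 11395300, 17955800, 26272300, 35878100, 45933700, 55348400, 62987600, 67908500, 69553100, 67845300, 63171200, 56261800, 48020300, 39346600]"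
lemma ch1311: "chainok (1311/64) 0 L1311" by (simp add: L1311_def)
lemma ex1311: "exp (1311/64) \<le> EnL ! 20 * EjL ! 31" using exp_at[of 1311] by simp
definition L1313 :: "real list" where "L1313 = [1, 51289/2500, 42089/200, 143913/100, 184529/25, 151429/5, 103555, 303499, 778308, 1774160, 3639800, 6788430, 11605700, 18315200, 26839100, 36708000, 47067900, 56801600, 64740000, 69904200, 71706400, 70052400, 65325800, 58269500, 49809800, 40875100]"
lemma ch1313: "chainok (1313/64) 0 L1313" by (simp add: L1313_def)
lemma ex1313: "exp (1313/64) \<le> EnL ! 20 * EjL ! 33" using exp_at[of 1313] by simp
definition L1369 :: "real list" where "L1369 = [1, 106953/5000, 228779/1000, 40781/25, 872331/100, 186597/5, 133047, 406565, 1087080, 2583700, 5526690, 10747200, 19157400, 31522200, 48162800, 68682100, 91822000, 115537000, 137300000, 154575000, 165322000, 168397000, 163732000, 152275000, 135719000, 116124000, 95537100]"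
lemma ch1369: "chainok (1369/64) 0 L1369" by (simp add: L1369_def)
lemma ex1369: "exp (1369/64) \<le> EnL ! 21 * EjL ! 25" using exp_at[of 1369] by simp
definition L1385 :: "real list" where "L1385 = [1, 108203/5000, 117079/500, 16891/10, 913829/100, 197758/5, 142653, 441014, 1192970, 2868510, 6207630, 12212400, 22023600, 36661800, 56670300, 81758700, 110581000, 140767000, 169238000, 192758000, 208570000, 214932000, 211421000, 198925000, 179369000, 155266000, 129232000]"
lemma ch1385: "chainok (1385/64) 0 L1385" by (simp add: L1385_def)
lemma ex1385: "exp (1385/64) \<le> EnL ! 21 * EjL ! 41" using exp_at[of 1385] by simp
definition L1426 :: "real list" where "L1426 = [1, 55703/2500, 124113/500, 184359/100, 102693/10, 91525/2, 169940, 540925, 1506560, 3729780, 8310410, 16833300, 31255500, 53570100, 85257700, 126643000, 176360000, 231148000, 286125000, 335538000, 373810000, 396616000, 401686000, 389133000, 361265000, 321977000, 275925000, 227701000]"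
lemma ch1426: "chainok (713/32) 0 L1426" by (simp add: L1426_def)
lemma ex1426: "exp (713/32) \<le> EnL ! 22 * EjL ! 18" using exp_at[of 1426] by simp
definition L1457 :: "real list" where "L1457 = [1, 28457/1250, 32392/125, 98323/50, 111919/10, 509581/10, 193348, 628812, 1789410, 4526330, 10304400, 21326000, 40458300, 70850600, 115211000, 174856000, 248794000, 333173000, 421382000, 504896000, 574713000, 623033000, 644715000, 638145000, 605323000, 551222000, 482650000, 406956000]"
lemma ch1457: "chainok (1457/64) 0 L1457" by (simp add: L1457_def)
lemma ex1457: "exp (1457/64) \<le> EnL ! 22 * EjL ! 49" using exp_at[of 1457] by simp
definition L1484 :: "real list" where "L1484 = [1, 371/16, 26883/100, 207783/100, 120449/10, 279291/5, 215868, 715062, 2072560, 5339720, 12381400, 26099400, 50431600, 89952500, 148983000, 230302000, 333757000, 455234000, 586429000, 715674000, 829734000, 916164000, 965616000, 973487000, 940530000, 872341000, 777977000, 668123000, 553289000]"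
lemma ch1484: "chainok (371/16) 0 L1484" by (simp add: L1484_def)
lemma ex1484: "exp (371/16) \<le> EnL ! 23 * EjL ! 12" using exp_at[of 1484] by simp
definition L1528 :: "real list" where "L1528 = [1, 191/8, 285007/1000, 113409/50, 135381/10, 323222/5, 257230, 877338, 2618300, 6945760, 16583000, 35992600, 71610200, 131514000, 224278000, 356975000, 532673000, 748092000, 992260000, 1246850000, 1488420000, 1692190000, 1836410000, 1906270000, 1896340000, 1811000000, 1662980000, 1470500000, 1253860000]"
lemma ch1528: "chainok (191/8) 0 L1528" by (simp add: L1528_def)
lemma ex1528: "exp (191/8) \<le> EnL ! 23 * EjL ! 56" using exp_at[of 1528] by simp
definition L1542 :: "real list" where "L1542 = [1, 240937/10000, 290253/1000, 233109/100, 140411/10, 135321/2, 271699, 935178, 2816490, 7539970, 18166600, 39791000, 79892800, 148070000, 254825000, 409312000, 616366000, 873562000, 1169290000, 1482760000, 1786260000, 2049410000, 2244450000, 2351180000, 2360360000, 2274790000, 2108000000, 1881090000, 1618660000, 1344810000]"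
lemma ch1542: "chainok (771/32) 0 L1542" by (simp add: L1542_def)
lemma ex1542: "exp (771/32) \<le> EnL ! 24 * EjL ! 6" using exp_at[of 1542] by simp
definition L1600 :: "real list" where "L1600 = [1, 25, 625/2, 65104/25, 16276, 81380, 339083, 1211010, 3784400, 10512200, 26280500, 59728400, 124434000, 239296000, 427314000, 712190000, 1112790000, 1636450000, 2272840000, 2990570000, 3738210000, 4450250000, 5057100000, 5496840000, 5725870000, 5725870000, 5505640000, 5097810000, 4551610000, 3923800000, 3269830000]"
lemma ch1600: "chainok (25) 0 L1600" by (simp add: L1600_def)
lemma ex1600: "exp (25) \<le> EnL ! 25 * EjL ! 0" using exp_at[of 1600] by simp
definition L1659 :: "real list" where "L1659 = [1, 129609/5000, 33597/100, 290299/100, 188127/10, 97532, 421368, 1560370, 5055960, 14562200, 37747900, 88954200, 192154000, 383153000, 709431000, 1225980000, 1986230000, 3028630000, 4361540000, 5950480000, 7712370000, 9519950000, 11217000000, 12641900000, 13654200000, 14157600000, 14115000000, 13551300000, 12545500000, 11213800000, 9689420000, 8102190000]"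
lemma ch1659: "chainok (1659/64) 0 L1659" by (simp add: L1659_def)
lemma ex1659: "exp (1659/64) \<le> EnL ! 25 * EjL ! 59" using exp_at[of 1659] by simp
definition L1671 :: "real list" where "L1671 = [1, 261093/10000, 42606/125, 74161/25, 193629/10, 101110, 439986, 1641100, 5356010, 15538000, 40568700, 96293000, 209512000, 420786000, 784747000, 1365950000, 2229000000, 3423390000, 4965690000, 6823740000, 8908170000, 11075500000, 13144200000, 14921100000, 16232500000, 16952800000, 17024100000, 16462500000, 15350900000, 13820700000, 12028300000, 10130600000]"
lemma ch1671: "chainok (1671/64) 0 L1671" by (simp add: L1671_def)
lemma ex1671: "exp (1671/64) \<le> EnL ! 26 * EjL ! 7" using exp_at[of 1671] by simp
definition L1717 :: "real list" where "L1717 = [1, 268281/10000, 359873/1000, 321823/100, 215847/10, 115815, 517849, 1984700, 6655720, 19840000, 53227000, 129816000, 290226000, 598939000, 1147740000, 2052780000, 3442010000, 5431920000, 8096010000, 11431600000, 15334400000, 19590100000, 23889300000, 27865400000, 31149000000, 33426700000, 34491300000, 34271700000, 32837300000, 30378000000, 27166100000, 23510100000, 19710300000]"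
lemma ch1717: "chainok (1717/64) 0 L1717" by (simp add: L1717_def)
lemma ex1717: "exp (1717/64) \<le> EnL ! 26 * EjL ! 53" using exp_at[of 1717] by simp
definition L1741 :: "real list" where "L1741 = [1, 272031/10000, 92501/250, 83877/25, 228171/10, 124139, 562828, 2187240, 7437470, 22480200, 61153100, 151232000, 342831000, 717390000, 1393940000, 2527960000, 4298020000, 6877620000, 10394000000, 14881500000, 20241100000, 26220000000, 32421100000, 38345800000, 43463500000, 47293700000, 49482100000, 49854300000, 48435400000, 45434200000, 41198400000, 36152400000, 30733000000]"
lemma ch1741: "chainok (1741/64) 0 L1741" by (simp add: L1741_def)
lemma ex1741: "exp (1741/64) \<le> EnL ! 27 * EjL ! 13" using exp_at[of 1741] by simp
definition L1775 :: "real list" where "L1775 = [1, 277343/10000, 96149/250, 7111/2, 246523/10, 136743, 632080, 2504330, 8682000, 26754400, 74201600, 187085000, 432390000, 922466000, 1827420000, 3378820000, 5856840000, 9555040000, 14722300000, 21490100000, 29800700000, 39357300000, 49615900000, 59828900000, 69138200000, 76700100000, 81816500000, 84041800000, 83244500000, 79611500000, 73599100000, 65845900000, 57068500000, 47962300000]"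
lemma ch1775: "chainok (1775/64) 0 L1775" by (simp add: L1775_def)
lemma ex1775: "exp (1775/64) \<le> EnL ! 27 * EjL ! 47" using exp_at[of 1775] by simp
definition L1812 :: "real list" where "L1812 = [1, 453/16, 200399/500, 378253/100, 133866/5, 151603, 715376, 2893440, 10240000, 32213300, 91203900, 234746000, 553853000, 1206220000, 2439360000, 4604290000, 8147430000, 13569000000, 21342900000, 31803700000, 45022100000, 60699400000, 78115900000, 96158900000, 113437000000, 128467000000, 139893000000, 146693000000, 148330000000, 144813000000, 136667000000, 124818000000, 110434000000, 94747300000]"
lemma ch1812: "chainok (453/16) 0 L1812" by (simp add: L1812_def)
lemma ex1812: "exp (453/16) \<le> EnL ! 28 * EjL ! 20" using exp_at[of 1812] by simp
definition L1834 :: "real list" where "L1834 = [1, 143281/5000, 410589/1000, 196099/50, 280973/10, 161032, 769095, 3148480, 11277900, 35909100, 102902000, 268071000, 640159000, 1411110000, 2888360000, 5517970000, 9882770000, 16659000000, 26521300000, 40000000000, 57312500000, 78207600000, 101869000000, 126921000000, 151544000000, 173707000000, 191453000000, 203197000000, 207959000000, 205493000000, 196288000000, 181447000000, 162487000000, 141099000000, 118922000000]"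
lemma ch1834: "chainok (917/32) 0 L1834" by (simp add: L1834_def)
lemma ex1834: "exp (917/32) \<le> EnL ! 28 * EjL ! 42" using exp_at[of 1834] by simp
definition L1883 :: "real list" where "L1883 = [1, 147109/5000, 216411/500, 424481/100, 62445/2, 183724, 900917, 3786660, 13926300, 45526400, 133947000, 358270000, 878414000, 1988040000, 4177990000, 8194950000, 15069400000, 26080500000, 42629800000, 66013000000, 97111300000, 136056000000, 181955000000, 232759000000, 285341000000, 335810000000, 380006000000, 414092000000, 435120000000, 441449000000, 432941000000, 410901000000, 377796000000, 336832000000, 291477000000]"
lemma ch1883: "chainok (1883/64) 0 L1883" by (simp add: L1883_def)
lemma ex1883: "exp (1883/64) \<le> EnL ! 29 * EjL ! 27" using exp_at[of 1883] by simp
definition L1893 :: "real list" where "L1893 = [1, 295781/10000, 54679/125, 21564/5, 318911/10, 188655, 930010, 3929700, 14529100, 47749200, 141233000, 379764000, 936058000, 2129750000, 4499570000, 8872580000, 16402100000, 28537800000, 46894100000, 73002000000, 107963000000, 152063000000, 204442000000, 262913000000, 324019000000, 383354000000, 436111000000, 477753000000, 504679000000, 514739000000, 507500000000, 484222000000, 447574000000, 401163000000, 348989000000, 294926000000]"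
lemma ch1893: "chainok (1893/64) 0 L1893" by (simp add: L1893_def)
lemma ex1893: "exp (1893/64) \<le> EnL ! 29 * EjL ! 37" using exp_at[of 1893] by simp
definition L1951 :: "real list" where "L1951 = [1, 304843/10000, 464647/1000, 472149/100, 359829/10, 219383, 1114620, 4854070, 18496600, 62650800, 190987000, 529283000, 1344570000, 3152950000, 6865400000, 13952400000, 26583100000, 47668700000, 80730500000, 129527000000, 197427000000, 286592000000, 397117000000, 526341000000, 668549000000, 815211000000, 955815000000, 1079160000000, 1174910000000, 1235040000000, 1254980000000, 1234100000000, 1175640000000, 1086010000000, 973715000000, 848088000000, 718150000000]"
lemma ch1951: "chainok (1951/64) 0 L1951" by (simp add: L1951_def)
lemma ex1951: "exp (1951/64) \<le> EnL ! 30 * EjL ! 31" using exp_at[of 1951] by simp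
definition L1953 :: "real list" where "L1953 = [1, 76289/2500, 465601/1000, 473603/100, 361307/10, 220510, 1121500, 4889030, 18648900, 63231400, 192954000, 535282000, 1361200000, 3195220000, 6964580000, 14168500000, 27022500000, 48506300000, 82233300000, 132073000000, 201514000000, 292825000000, 406169000000, 538891000000, 685191000000, 836361000000, 981618000000, 1109430000000, 1209100000000, 1272290000000, 1294150000000, 1273920000000, 1214820000000, 1123360000000, 1008230000000, 879050000000, 745132000000]"
lemma ch1953: "chainok (1953/64) 0 L1953" by (simp add: L1953_def)
lemma ex1953: "exp (1953/64) \<le> EnL ! 30 * EjL ! 33" using exp_at[of 1953] by simp
definition L2010 :: "real list" where "L2010 = [1, 157031/5000, 19727/40, 129073/25, 405369/10, 254622, 1332780, 5979660, 23474800, 81917200, 257271000, 734537000, 1922420000, 4644300000, 10418500000, 21813700000, 42817900000, 79102900000, 138018000000, 228138000000, 358247000000, 535771000000, 764843000000, 1044380000000, 1366660000000, 1716860000000, 2073850000000, 2412290000000, 2705740000000, 2930240000000, 3067590000000, 3107790000000, 3050120000000, 2902810000000, 2681360000000, 2406040000000, 2099010000000, 1781670000000]"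
lemma ch2010: "chainok (1005/32) 0 L2010" by (simp add: L2010_def)
lemma ex2010: "exp (1005/32) \<le> EnL ! 31 * EjL ! 26" using exp_at[of 2010] by simp
definition L2023 :: "real list" where "L2023 = [1, 316093/10000, 19983/40, 21055/4, 415959/10, 262964, 1385350, 6255720, 24717400, 86811200, 274404000, 788521000, 2077050000, 5050320000, 11402600000, 24028600000, 47470500000, 88265400000, 155000000000, 257865000000, 407547000000, 613443000000, 881388000000, 1211300000000, 1595350000000, 2017120000000, 2452300000000, 2870950000000, 3241030000000, 3532650000000, 3722160000000, 3795320000000, 3748990000000, 3591000000000, 3338500000000, 3015080000000, 2647350000000, 2261650000000]"
lemma ch2023: "chainok (2023/64) 0 L2023" by (simp add: L2023_def)
lemma ex2023: "exp (2023/64) \<le> EnL ! 31 * EjL ! 39" using exp_at[of 2023] by simp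
definition L2069 :: "real list" where "L2069 = [1, 323281/10000, 522553/1000, 112621/20, 455103/10, 294252, 1585430, 7321990, 29588200, 106281000, 343586000, 1009770000, 2720330000, 6764850000, 15621000000, 33666500000, 68023400000, 129356000000, 232324000000, 395294000000, 638955000000, 983629000000, 1445400000000, 2031610000000, 2736580000000, 3538740000000, 4400030000000, 5268320000000, 6082670000000, 6780730000000, 7306940000000, 7619980000000, 7698110000000, 7541370000000, 7170530000000, 6623130000000, 5947590000000, 5196600000000, 4420950000000]"
lemma ch2069: "chainok (2069/64) 0 L2069" by (simp add: L2069_def)
lemma ex2069: "exp (2069/64) \<le> EnL ! 32 * EjL ! 21" using exp_at[of 2069] by simp
definition L2094 :: "real list" where "L2094 = [1, 327187/10000, 535257/1000, 145941/25, 47750, 312464, 1703900, 7964210, 32572300, 118413000, 387432000, 1152390000, 3142060000, 7908020000, 18481400000, 40312500000, 82435900000, 158658000000, 288393000000, 496624000000, 812445000000, 1265810000000, 1882530000000, 2678000000000, 3650860000000, 4778060000000, 6012770000000, 7286300000000, 8514230000000, 9606030000000, 10476500000000, 11057300000000, 11305600000000, 11209200000000, 10786700000000, 10083600000000, 9164520000000, 8104090000000, 6977780000000]"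
lemma ch2094: "chainok (1047/32) 0 L2094" by (simp add: L2094_def)
lemma ex2094: "exp (1047/32) \<le> EnL ! 32 * EjL ! 46" using exp_at[of 2094] by simp
definition L2128 :: "real list" where "L2128 = [1, 133/4, 552781/1000, 122533/20, 509277/10, 338669, 1876790, 8914750, 37051900, 136886000, 455145000, 1375770000, 3812020000, 9749970000, 23156100000, 51329300000, 106668000000, 208630000000, 385385000000, 674423000000, 1121220000000, 1775260000000, 2683060000000, 3878770000000, 5373710000000, 7147030000000, 9139950000000, 11255600000000, 13366000000000, 15324800000000, 16984900000000, 18217600000000, 18929200000000, 19072600000000, 18651800000000, 17719200000000, 16365600000000, 14706900000000, 12868500000000, 10971200000000]"
lemma ch2128: "chainok (133/4) 0 L2128" by (simp add: L2128_def)
lemma ex2128: "exp (133/4) \<le> EnL ! 33 * EjL ! 16" using exp_at[of 2128] by simp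
definition L2164 :: "real list" where "L2164 = [1, 541/16, 285821/500, 161072/25, 272312/5, 368301, 2075520, 10025500, 42373400, 159194000, 538274000, 1654580000, 4662120000, 12125900000, 29286200000, 66015900000, 139510000000, 277481000000, 521240000000, 927601000000, 1568220000000, 2525020000000, 3880780000000, 5705160000000, 8037730000000, 10871000000000, 14137500000000, 17704600000000, 21379800000000, 24927700000000, 28095500000000, 30644400000000, 32380100000000, 33177300000000, 32994300000000, 31874800000000, 29937900000000, 27358700000000, 24343800000000, 21105700000000]"
lemma ch2164: "chainok (541/16) 0 L2164" by (simp add: L2164_def)
lemma ex2164: "exp (541/16) \<le> EnL ! 33 * EjL ! 52" using exp_at[of 2164] by simp
definition L2186 :: "real list" where "L2186 = [1, 170781/5000, 583323/1000, 664137/100, 56711, 387407, 2205390, 10761100, 45944800, 174366000, 595568000, 1849300000, 5263760000, 13830000000, 33741400000, 76831900000, 164018000000, 329543000000, 625330000000, 1124150000000, 1919830000000, 3122580000000, 4847980000000, 7199510000000, 10246100000000, 13998700000000, 18390100000000, 23264300000000, 28379300000000, 33425100000000, 38055800000000, 41930400000000, 44755700000000, 46323800000000, 46536600000000, 45414700000000, 43088700000000, 39776900000000, 35753400000000, 31312800000000, 26738100000000]"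
lemma ch2186: "chainok (1093/32) 0 L2186" by (simp add: L2186_def)
lemma ex2186: "exp (1093/32) \<le> EnL ! 34 * EjL ! 10" using exp_at[of 2186] by simp
definition L2234 :: "real list" where "L2234 = [1, 174531/5000, 304611/500, 141771/20, 309293/5, 431850, 2512370, 12528200, 54664000, 212012000, 740054000, 2348400000, 6831150000, 18342200000, 45732600000, 106423000000, 232176000000, 476729000000, 924490000000, 1698440000000, 2964300000000, 4927260000000, 7817820000000, 11864800000000, 17256400000000, 24094200000000, 32347600000000, 41819700000000, 52134600000000, 62752500000000, 73015100000000, 82215500000000, 89682300000000, 94862800000000, 97391300000000, 97130400000000, 94179300000000, 88849800000000, 81616100000000, 73049000000000, 63746600000000]"
lemma ch2234: "chainok (1117/32) 0 L2234" by (simp add: L2234_def)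
lemma ex2234: "exp (1117/32) \<le> EnL ! 34 * EjL ! 58" using exp_at[of 2234] by simp
definition L2245 :: "real list" where "L2245 = [1, 350781/10000, 153809/250, 719377/100, 630859/10, 442587, 2587520, 12966400, 56854600, 221594000, 777310000, 2478770000, 7245880000, 19551600000, 48988100000, 114560000000, 251159000000, 518246000000, 1009940000000, 1864560000000, 3270260000000, 5462590000000, 8709880000000, 13283700000000, 19415300000000, 27242000000000, 36753700000000, 47750000000000, 59820700000000, 72358500000000, 84606600000000, 95736800000000, 104945000000000, 111553000000000, 115090000000000, 115346000000000, 112392000000000, 106554000000000, 98360900000000, 88469600000000, 77583600000000, 66377700000000]"
lemma ch2245: "chainok (2245/64) 0 L2245" by (simp add: L2245_def)
lemma ex2245: "exp (2245/64) \<le> EnL ! 35 * EjL ! 5" using exp_at[of 2245] by simp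
definition L2304 :: "real list" where "L2304 = [1, 36, 648, 7776, 69984, 503884, 3023300, 15548400, 69967800, 279871000, 1007530000, 3297370000, 9892110000, 27393500000, 70440400000, 169056000000, 380376000000, 805502000000, 1611000000000, 3052420000000, 5494350000000, 9418880000000, 15412700000000, 24124200000000, 36186300000000, 52108200000000, 72149800000000, 96199700000000, 123685000000000, 153540000000000, 184248000000000, 213965000000000, 240710000000000, 262592000000000, 278038000000000, 285981000000000, 285981000000000, 278251000000000, 263606000000000, 243328000000000, 218995000000000, 192288000000000]"
lemma ch2304: "chainok (36) 0 L2304" by (simp add: L2304_def)
lemma ex2304: "exp (36) \<le> EnL ! 36 * EjL ! 0" using exp_at[of 2304] by simp
lemma g16_0_0: "cc \<le> G 0 0 (1/4)" unfolding cc_def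
  by (rule check_G[OF _ ex16 ch16]) (simp_all add: L16_def EnL_def EjL_def)
lemma g25_0_0: "cc \<le> G 0 0 (25/64)" unfolding cc_def
  by (rule check_G[OF _ ex25 ch25]) (simp_all add: L25_def EnL_def EjL_def)
lemma cell0: "\<forall>l. 1/4 \<le> l \<and> l \<le> 25/64 \<longrightarrow> cc \<le> FF l"
  by (intro allI impI, rule cell[of "1/4" "25/64" 0 0, OF _ _ _ _ _ g16_0_0 g25_0_0]) (simp_all add: power2_eq_square)
lemma g25_0_1: "cc \<le> G 0 1 (25/64)" unfolding cc_def
  by (rule check_G[OF _ ex25 ch25]) (simp_all add: L25_def EnL_def EjL_def)
lemma g64_0_1: "cc \<le> G 0 1 (1)"
proof -
  have "{1..2::nat} = {1,2}" by auto
  then show ?thesis by (simp add: cc_def G_def PP_def)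
qed
lemma cell1: "\<forall>l. 25/64 \<le> l \<and> l \<le> 1 \<longrightarrow> cc \<le> FF l"
  by (intro allI impI, rule cell[of "25/64" "1" 0 1, OF _ _ _ _ _ g25_0_1 g64_0_1]) (simp_all add: power2_eq_square)
lemma g64_1_2: "cc \<le> G 1 2 (1)"
proof -
  have "{1..2::nat} = {1,2}" by auto
  then show ?thesis by (simp add: cc_def G_def PP_def)
qed
lemma g109_1_2: "cc \<le> G 1 2 (109/64)" unfolding cc_def
  by (rule check_G[OF _ ex109 ch109]) (simp_all add: L109_def EnL_def EjL_def)
lemma cell2: "\<forall>l. 1 \<le> l \<and> l \<le> 109/64 \<longrightarrow> cc \<le> FF l"
  by (intro allI impI, rule cell[of "1" "109/64" 1 2, OF _ _ _ _ _ g64_1_2 g109_1_2]) (simp_all add: power2_eq_square)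
lemma g109_1_3: "cc \<le> G 1 3 (109/64)" unfolding cc_def
  by (rule check_G[OF _ ex109 ch109]) (simp_all add: L109_def EnL_def EjL_def)
lemma g157_1_3: "cc \<le> G 1 3 (157/64)" unfolding cc_def
  by (rule check_G[OF _ ex157 ch157]) (simp_all add: L157_def EnL_def EjL_def)
lemma cell3: "\<forall>l. 109/64 \<le> l \<and> l \<le> 157/64 \<longrightarrow> cc \<le> FF l"
  by (intro allI impI, rule cell[of "109/64" "157/64" 1 3, OF _ _ _ _ _ g109_1_3 g157_1_3]) (simp_all add: power2_eq_square)
lemma g157_1_4: "cc \<le> G 1 4 (157/64)" unfolding cc_def
  by (rule check_G[OF _ ex157 ch157]) (simp_all add: L157_def EnL_def EjL_def)
lemma g167_1_4: "cc \<le> G 1 4 (167/64)" unfolding cc_def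
  by (rule check_G[OF _ ex167 ch167]) (simp_all add: L167_def EnL_def EjL_def)
lemma cell4: "\<forall>l. 157/64 \<le> l \<and> l \<le> 167/64 \<longrightarrow> cc \<le> FF l"
  by (intro allI impI, rule cell[of "157/64" "167/64" 1 4, OF _ _ _ _ _ g157_1_4 g167_1_4]) (simp_all add: power2_eq_square)
lemma g167_2_4: "cc \<le> G 2 4 (167/64)" unfolding cc_def
  by (rule check_G[OF _ ex167 ch167]) (simp_all add: L167_def EnL_def EjL_def)
lemma g206_2_4: "cc \<le> G 2 4 (103/32)" unfolding cc_def
  by (rule check_G[OF _ ex206 ch206]) (simp_all add: L206_def EnL_def EjL_def)
lemma cell5: "\<forall>l. 167/64 \<le> l \<and> l \<le> 103/32 \<longrightarrow> cc \<le> FF l"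
  by (intro allI impI, rule cell[of "167/64" "103/32" 2 4, OF _ _ _ _ _ g167_2_4 g206_2_4]) (simp_all add: power2_eq_square)
lemma g206_2_5: "cc \<le> G 2 5 (103/32)" unfolding cc_def
  by (rule check_G[OF _ ex206 ch206]) (simp_all add: L206_def EnL_def EjL_def)
lemma g256_2_5: "cc \<le> G 2 5 (4)" unfolding cc_def
  by (rule check_G[OF _ ex256 ch256]) (simp_all add: L256_def EnL_def EjL_def)
lemma cell6: "\<forall>l. 103/32 \<le> l \<and> l \<le> 4 \<longrightarrow> cc \<le> FF l"
  by (intro allI impI, rule cell[of "103/32" "4" 2 5, OF _ _ _ _ _ g206_2_5 g256_2_5]) (simp_all add: power2_eq_square)
lemma g256_3_6: "cc \<le> G 3 6 (4)" unfolding cc_def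
  by (rule check_G[OF _ ex256 ch256]) (simp_all add: L256_def EnL_def EjL_def)
lemma g308_3_6: "cc \<le> G 3 6 (77/16)" unfolding cc_def
  by (rule check_G[OF _ ex308 ch308]) (simp_all add: L308_def EnL_def EjL_def)
lemma cell7: "\<forall>l. 4 \<le> l \<and> l \<le> 77/16 \<longrightarrow> cc \<le> FF l"
  by (intro allI impI, rule cell[of "4" "77/16" 3 6, OF _ _ _ _ _ g256_3_6 g308_3_6]) (simp_all add: power2_eq_square)
lemma g308_3_7: "cc \<le> G 3 7 (77/16)" unfolding cc_def
  by (rule check_G[OF _ ex308 ch308]) (simp_all add: L308_def EnL_def EjL_def)
lemma g339_3_7: "cc \<le> G 3 7 (339/64)" unfolding cc_def
  by (rule check_G[OF _ ex339 ch339]) (simp_all add: L339_def EnL_def EjL_def)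
lemma cell8: "\<forall>l. 77/16 \<le> l \<and> l \<le> 339/64 \<longrightarrow> cc \<le> FF l"
  by (intro allI impI, rule cell[of "77/16" "339/64" 3 7, OF _ _ _ _ _ g308_3_7 g339_3_7]) (simp_all add: power2_eq_square)
lemma g339_4_7: "cc \<le> G 4 7 (339/64)" unfolding cc_def
  by (rule check_G[OF _ ex339 ch339]) (simp_all add: L339_def EnL_def EjL_def)
lemma g361_4_7: "cc \<le> G 4 7 (361/64)" unfolding cc_def
  by (rule check_G[OF _ ex361 ch361]) (simp_all add: L361_def EnL_def EjL_def)
lemma cell9: "\<forall>l. 339/64 \<le> l \<and> l \<le> 361/64 \<longrightarrow> cc \<le> FF l"
  by (intro allI impI, rule cell[of "339/64" "361/64" 4 7, OF _ _ _ _ _ g339_4_7 g361_4_7]) (simp_all add: power2_eq_square)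
lemma g361_4_8: "cc \<le> G 4 8 (361/64)" unfolding cc_def
  by (rule check_G[OF _ ex361 ch361]) (simp_all add: L361_def EnL_def EjL_def)
lemma g414_4_8: "cc \<le> G 4 8 (207/32)" unfolding cc_def
  by (rule check_G[OF _ ex414 ch414]) (simp_all add: L414_def EnL_def EjL_def)
lemma cell10: "\<forall>l. 361/64 \<le> l \<and> l \<le> 207/32 \<longrightarrow> cc \<le> FF l"
  by (intro allI impI, rule cell[of "361/64" "207/32" 4 8, OF _ _ _ _ _ g361_4_8 g414_4_8]) (simp_all add: power2_eq_square)
lemma g414_4_9: "cc \<le> G 4 9 (207/32)" unfolding cc_def
  by (rule check_G[OF _ ex414 ch414]) (simp_all add: L414_def EnL_def EjL_def)
lemma g419_4_9: "cc \<le> G 4 9 (419/64)" unfolding cc_def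
  by (rule check_G[OF _ ex419 ch419]) (simp_all add: L419_def EnL_def EjL_def)
lemma cell11: "\<forall>l. 207/32 \<le> l \<and> l \<le> 419/64 \<longrightarrow> cc \<le> FF l"
  by (intro allI impI, rule cell[of "207/32" "419/64" 4 9, OF _ _ _ _ _ g414_4_9 g419_4_9]) (simp_all add: power2_eq_square)
lemma g419_5_9: "cc \<le> G 5 9 (419/64)" unfolding cc_def
  by (rule check_G[OF _ ex419 ch419]) (simp_all add: L419_def EnL_def EjL_def)
lemma g468_5_9: "cc \<le> G 5 9 (117/16)" unfolding cc_def
  by (rule check_G[OF _ ex468 ch468]) (simp_all add: L468_def EnL_def EjL_def)
lemma cell12: "\<forall>l. 419/64 \<le> l \<and> l \<le> 117/16 \<longrightarrow> cc \<le> FF l"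
  by (intro allI impI, rule cell[of "419/64" "117/16" 5 9, OF _ _ _ _ _ g419_5_9 g468_5_9]) (simp_all add: power2_eq_square)
lemma g468_5_10: "cc \<le> G 5 10 (117/16)" unfolding cc_def
  by (rule check_G[OF _ ex468 ch468]) (simp_all add: L468_def EnL_def EjL_def)
lemma g498_5_10: "cc \<le> G 5 10 (249/32)" unfolding cc_def
  by (rule check_G[OF _ ex498 ch498]) (simp_all add: L498_def EnL_def EjL_def)
lemma cell13: "\<forall>l. 117/16 \<le> l \<and> l \<le> 249/32 \<longrightarrow> cc \<le> FF l"
  by (intro allI impI, rule cell[of "117/16" "249/32" 5 10, OF _ _ _ _ _ g468_5_10 g498_5_10]) (simp_all add: power2_eq_square)
lemma g498_6_10: "cc \<le> G 6 10 (249/32)" unfolding cc_def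
  by (rule check_G[OF _ ex498 ch498]) (simp_all add: L498_def EnL_def EjL_def)
lemma g522_6_10: "cc \<le> G 6 10 (261/32)" unfolding cc_def
  by (rule check_G[OF _ ex522 ch522]) (simp_all add: L522_def EnL_def EjL_def)
lemma cell14: "\<forall>l. 249/32 \<le> l \<and> l \<le> 261/32 \<longrightarrow> cc \<le> FF l"
  by (intro allI impI, rule cell[of "249/32" "261/32" 6 10, OF _ _ _ _ _ g498_6_10 g522_6_10]) (simp_all add: power2_eq_square)
lemma g522_6_11: "cc \<le> G 6 11 (261/32)" unfolding cc_def
  by (rule check_G[OF _ ex522 ch522]) (simp_all add: L522_def EnL_def EjL_def)
lemma g576_6_11: "cc \<le> G 6 11 (9)" unfolding cc_def
  by (rule check_G[OF _ ex576 ch576]) (simp_all add: L576_def EnL_def EjL_def)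
lemma cell15: "\<forall>l. 261/32 \<le> l \<and> l \<le> 9 \<longrightarrow> cc \<le> FF l"
  by (intro allI impI, rule cell[of "261/32" "9" 6 11, OF _ _ _ _ _ g522_6_11 g576_6_11]) (simp_all add: power2_eq_square)
lemma g576_7_12: "cc \<le> G 7 12 (9)" unfolding cc_def
  by (rule check_G[OF _ ex576 ch576]) (simp_all add: L576_def EnL_def EjL_def)
lemma g632_7_12: "cc \<le> G 7 12 (79/8)" unfolding cc_def
  by (rule check_G[OF _ ex632 ch632]) (simp_all add: L632_def EnL_def EjL_def)
lemma cell16: "\<forall>l. 9 \<le> l \<and> l \<le> 79/8 \<longrightarrow> cc \<le> FF l"
  by (intro allI impI, rule cell[of "9" "79/8" 7 12, OF _ _ _ _ _ g576_7_12 g632_7_12]) (simp_all add: power2_eq_square)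
lemma g632_7_13: "cc \<le> G 7 13 (79/8)" unfolding cc_def
  by (rule check_G[OF _ ex632 ch632]) (simp_all add: L632_def EnL_def EjL_def)
lemma g652_7_13: "cc \<le> G 7 13 (163/16)" unfolding cc_def
  by (rule check_G[OF _ ex652 ch652]) (simp_all add: L652_def EnL_def EjL_def)
lemma cell17: "\<forall>l. 79/8 \<le> l \<and> l \<le> 163/16 \<longrightarrow> cc \<le> FF l"
  by (intro allI impI, rule cell[of "79/8" "163/16" 7 13, OF _ _ _ _ _ g632_7_13 g652_7_13]) (simp_all add: power2_eq_square)
lemma g652_8_13: "cc \<le> G 8 13 (163/16)" unfolding cc_def
  by (rule check_G[OF _ ex652 ch652]) (simp_all add: L652_def EnL_def EjL_def)
lemma g687_8_13: "cc \<le> G 8 13 (687/64)" unfolding cc_def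
  by (rule check_G[OF _ ex687 ch687]) (simp_all add: L687_def EnL_def EjL_def)
lemma cell18: "\<forall>l. 163/16 \<le> l \<and> l \<le> 687/64 \<longrightarrow> cc \<le> FF l"
  by (intro allI impI, rule cell[of "163/16" "687/64" 8 13, OF _ _ _ _ _ g652_8_13 g687_8_13]) (simp_all add: power2_eq_square)
lemma g687_8_14: "cc \<le> G 8 14 (687/64)" unfolding cc_def
  by (rule check_G[OF _ ex687 ch687]) (simp_all add: L687_def EnL_def EjL_def)
lemma g727_8_14: "cc \<le> G 8 14 (727/64)" unfolding cc_def
  by (rule check_G[OF _ ex727 ch727]) (simp_all add: L727_def EnL_def EjL_def)
lemma cell19: "\<forall>l. 687/64 \<le> l \<and> l \<le> 727/64 \<longrightarrow> cc \<le> FF l"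
  by (intro allI impI, rule cell[of "687/64" "727/64" 8 14, OF _ _ _ _ _ g687_8_14 g727_8_14]) (simp_all add: power2_eq_square)
lemma g727_9_14: "cc \<le> G 9 14 (727/64)" unfolding cc_def
  by (rule check_G[OF _ ex727 ch727]) (simp_all add: L727_def EnL_def EjL_def)
lemma g743_9_14: "cc \<le> G 9 14 (743/64)" unfolding cc_def
  by (rule check_G[OF _ ex743 ch743]) (simp_all add: L743_def EnL_def EjL_def)
lemma cell20: "\<forall>l. 727/64 \<le> l \<and> l \<le> 743/64 \<longrightarrow> cc \<le> FF l"
  by (intro allI impI, rule cell[of "727/64" "743/64" 9 14, OF _ _ _ _ _ g727_9_14 g743_9_14]) (simp_all add: power2_eq_square)
lemma g743_9_15: "cc \<le> G 9 15 (743/64)" unfolding cc_def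
  by (rule check_G[OF _ ex743 ch743]) (simp_all add: L743_def EnL_def EjL_def)
lemma g799_9_15: "cc \<le> G 9 15 (799/64)" unfolding cc_def
  by (rule check_G[OF _ ex799 ch799]) (simp_all add: L799_def EnL_def EjL_def)
lemma cell21: "\<forall>l. 743/64 \<le> l \<and> l \<le> 799/64 \<longrightarrow> cc \<le> FF l"
  by (intro allI impI, rule cell[of "743/64" "799/64" 9 15, OF _ _ _ _ _ g743_9_15 g799_9_15]) (simp_all add: power2_eq_square)
lemma g799_9_16: "cc \<le> G 9 16 (799/64)" unfolding cc_def
  by (rule check_G[OF _ ex799 ch799]) (simp_all add: L799_def EnL_def EjL_def)
lemma g802_9_16: "cc \<le> G 9 16 (401/32)" unfolding cc_def
  by (rule check_G[OF _ ex802 ch802]) (simp_all add: L802_def EnL_def EjL_def)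
lemma cell22: "\<forall>l. 799/64 \<le> l \<and> l \<le> 401/32 \<longrightarrow> cc \<le> FF l"
  by (intro allI impI, rule cell[of "799/64" "401/32" 9 16, OF _ _ _ _ _ g799_9_16 g802_9_16]) (simp_all add: power2_eq_square)
lemma g802_10_16: "cc \<le> G 10 16 (401/32)" unfolding cc_def
  by (rule check_G[OF _ ex802 ch802]) (simp_all add: L802_def EnL_def EjL_def)
lemma g855_10_16: "cc \<le> G 10 16 (855/64)" unfolding cc_def
  by (rule check_G[OF _ ex855 ch855]) (simp_all add: L855_def EnL_def EjL_def)
lemma cell23: "\<forall>l. 401/32 \<le> l \<and> l \<le> 855/64 \<longrightarrow> cc \<le> FF l"
  by (intro allI impI, rule cell[of "401/32" "855/64" 10 16, OF _ _ _ _ _ g802_10_16 g855_10_16]) (simp_all add: power2_eq_square)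
lemma g855_10_17: "cc \<le> G 10 17 (855/64)" unfolding cc_def
  by (rule check_G[OF _ ex855 ch855]) (simp_all add: L855_def EnL_def EjL_def)
lemma g876_10_17: "cc \<le> G 10 17 (219/16)" unfolding cc_def
  by (rule check_G[OF _ ex876 ch876]) (simp_all add: L876_def EnL_def EjL_def)
lemma cell24: "\<forall>l. 855/64 \<le> l \<and> l \<le> 219/16 \<longrightarrow> cc \<le> FF l"
  by (intro allI impI, rule cell[of "855/64" "219/16" 10 17, OF _ _ _ _ _ g855_10_17 g876_10_17]) (simp_all add: power2_eq_square)
lemma g876_11_17: "cc \<le> G 11 17 (219/16)" unfolding cc_def
  by (rule check_G[OF _ ex876 ch876]) (simp_all add: L876_def EnL_def EjL_def)
lemma g911_11_17: "cc \<le> G 11 17 (911/64)" unfolding cc_def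
  by (rule check_G[OF _ ex911 ch911]) (simp_all add: L911_def EnL_def EjL_def)
lemma cell25: "\<forall>l. 219/16 \<le> l \<and> l \<le> 911/64 \<longrightarrow> cc \<le> FF l"
  by (intro allI impI, rule cell[of "219/16" "911/64" 11 17, OF _ _ _ _ _ g876_11_17 g911_11_17]) (simp_all add: power2_eq_square)
lemma g911_11_18: "cc \<le> G 11 18 (911/64)" unfolding cc_def
  by (rule check_G[OF _ ex911 ch911]) (simp_all add: L911_def EnL_def EjL_def)
lemma g950_11_18: "cc \<le> G 11 18 (475/32)" unfolding cc_def
  by (rule check_G[OF _ ex950 ch950]) (simp_all add: L950_def EnL_def EjL_def)
lemma cell26: "\<forall>l. 911/64 \<le> l \<and> l \<le> 475/32 \<longrightarrow> cc \<le> FF l"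
  by (intro allI impI, rule cell[of "911/64" "475/32" 11 18, OF _ _ _ _ _ g911_11_18 g950_11_18]) (simp_all add: power2_eq_square)
lemma g950_12_18: "cc \<le> G 12 18 (475/32)" unfolding cc_def
  by (rule check_G[OF _ ex950 ch950]) (simp_all add: L950_def EnL_def EjL_def)
lemma g968_12_18: "cc \<le> G 12 18 (121/8)" unfolding cc_def
  by (rule check_G[OF _ ex968 ch968]) (simp_all add: L968_def EnL_def EjL_def)
lemma cell27: "\<forall>l. 475/32 \<le> l \<and> l \<le> 121/8 \<longrightarrow> cc \<le> FF l"
  by (intro allI impI, rule cell[of "475/32" "121/8" 12 18, OF _ _ _ _ _ g950_12_18 g968_12_18]) (simp_all add: power2_eq_square)
lemma g968_12_19: "cc \<le> G 12 19 (121/8)" unfolding cc_def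
  by (rule check_G[OF _ ex968 ch968]) (simp_all add: L968_def EnL_def EjL_def)
lemma g1024_12_19: "cc \<le> G 12 19 (16)" unfolding cc_def
  by (rule check_G[OF _ ex1024 ch1024]) (simp_all add: L1024_def EnL_def EjL_def)
lemma cell28: "\<forall>l. 121/8 \<le> l \<and> l \<le> 16 \<longrightarrow> cc \<le> FF l"
  by (intro allI impI, rule cell[of "121/8" "16" 12 19, OF _ _ _ _ _ g968_12_19 g1024_12_19]) (simp_all add: power2_eq_square)
lemma g1024_13_20: "cc \<le> G 13 20 (16)" unfolding cc_def
  by (rule check_G[OF _ ex1024 ch1024]) (simp_all add: L1024_def EnL_def EjL_def)
lemma g1081_13_20: "cc \<le> G 13 20 (1081/64)" unfolding cc_def
  by (rule check_G[OF _ ex1081 ch1081]) (simp_all add: L1081_def EnL_def EjL_def)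
lemma cell29: "\<forall>l. 16 \<le> l \<and> l \<le> 1081/64 \<longrightarrow> cc \<le> FF l"
  by (intro allI impI, rule cell[of "16" "1081/64" 13 20, OF _ _ _ _ _ g1024_13_20 g1081_13_20]) (simp_all add: power2_eq_square)
lemma g1081_13_21: "cc \<le> G 13 21 (1081/64)" unfolding cc_def
  by (rule check_G[OF _ ex1081 ch1081]) (simp_all add: L1081_def EnL_def EjL_def)
lemma g1096_13_21: "cc \<le> G 13 21 (137/8)" unfolding cc_def
  by (rule check_G[OF _ ex1096 ch1096]) (simp_all add: L1096_def EnL_def EjL_def)
lemma cell30: "\<forall>l. 1081/64 \<le> l \<and> l \<le> 137/8 \<longrightarrow> cc \<le> FF l"
  by (intro allI impI, rule cell[of "1081/64" "137/8" 13 21, OF _ _ _ _ _ g1081_13_21 g1096_13_21]) (simp_all add: power2_eq_square)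
lemma g1096_14_21: "cc \<le> G 14 21 (137/8)" unfolding cc_def
  by (rule check_G[OF _ ex1096 ch1096]) (simp_all add: L1096_def EnL_def EjL_def)
lemma g1139_14_21: "cc \<le> G 14 21 (1139/64)" unfolding cc_def
  by (rule check_G[OF _ ex1139 ch1139]) (simp_all add: L1139_def EnL_def EjL_def)
lemma cell31: "\<forall>l. 137/8 \<le> l \<and> l \<le> 1139/64 \<longrightarrow> cc \<le> FF l"
  by (intro allI impI, rule cell[of "137/8" "1139/64" 14 21, OF _ _ _ _ _ g1096_14_21 g1139_14_21]) (simp_all add: power2_eq_square)
lemma g1139_14_22: "cc \<le> G 14 22 (1139/64)" unfolding cc_def
  by (rule check_G[OF _ ex1139 ch1139]) (simp_all add: L1139_def EnL_def EjL_def)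
lemma g1169_14_22: "cc \<le> G 14 22 (1169/64)" unfolding cc_def
  by (rule check_G[OF _ ex1169 ch1169]) (simp_all add: L1169_def EnL_def EjL_def)
lemma cell32: "\<forall>l. 1139/64 \<le> l \<and> l \<le> 1169/64 \<longrightarrow> cc \<le> FF l"
  by (intro allI impI, rule cell[of "1139/64" "1169/64" 14 22, OF _ _ _ _ _ g1139_14_22 g1169_14_22]) (simp_all add: power2_eq_square)
lemma g1169_15_22: "cc \<le> G 15 22 (1169/64)" unfolding cc_def
  by (rule check_G[OF _ ex1169 ch1169]) (simp_all add: L1169_def EnL_def EjL_def)
lemma g1196_15_22: "cc \<le> G 15 22 (299/16)" unfolding cc_def
  by (rule check_G[OF _ ex1196 ch1196]) (simp_all add: L1196_def EnL_def EjL_def)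
lemma cell33: "\<forall>l. 1169/64 \<le> l \<and> l \<le> 299/16 \<longrightarrow> cc \<le> FF l"
  by (intro allI impI, rule cell[of "1169/64" "299/16" 15 22, OF _ _ _ _ _ g1169_15_22 g1196_15_22]) (simp_all add: power2_eq_square)
lemma g1196_15_23: "cc \<le> G 15 23 (299/16)" unfolding cc_def
  by (rule check_G[OF _ ex1196 ch1196]) (simp_all add: L1196_def EnL_def EjL_def)
lemma g1241_15_23: "cc \<le> G 15 23 (1241/64)" unfolding cc_def
  by (rule check_G[OF _ ex1241 ch1241]) (simp_all add: L1241_def EnL_def EjL_def)
lemma cell34: "\<forall>l. 299/16 \<le> l \<and> l \<le> 1241/64 \<longrightarrow> cc \<le> FF l"
  by (intro allI impI, rule cell[of "299/16" "1241/64" 15 23, OF _ _ _ _ _ g1196_15_23 g1241_15_23]) (simp_all add: power2_eq_square)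
lemma g1241_16_23: "cc \<le> G 16 23 (1241/64)" unfolding cc_def
  by (rule check_G[OF _ ex1241 ch1241]) (simp_all add: L1241_def EnL_def EjL_def)
lemma g1253_16_23: "cc \<le> G 16 23 (1253/64)" unfolding cc_def
  by (rule check_G[OF _ ex1253 ch1253]) (simp_all add: L1253_def EnL_def EjL_def)
lemma cell35: "\<forall>l. 1241/64 \<le> l \<and> l \<le> 1253/64 \<longrightarrow> cc \<le> FF l"
  by (intro allI impI, rule cell[of "1241/64" "1253/64" 16 23, OF _ _ _ _ _ g1241_16_23 g1253_16_23]) (simp_all add: power2_eq_square)
lemma g1253_16_24: "cc \<le> G 16 24 (1253/64)" unfolding cc_def
  by (rule check_G[OF _ ex1253 ch1253]) (simp_all add: L1253_def EnL_def EjL_def)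
lemma g1311_16_24: "cc \<le> G 16 24 (1311/64)" unfolding cc_def
  by (rule check_G[OF _ ex1311 ch1311]) (simp_all add: L1311_def EnL_def EjL_def)
lemma cell36: "\<forall>l. 1253/64 \<le> l \<and> l \<le> 1311/64 \<longrightarrow> cc \<le> FF l"
  by (intro allI impI, rule cell[of "1253/64" "1311/64" 16 24, OF _ _ _ _ _ g1253_16_24 g1311_16_24]) (simp_all add: power2_eq_square)
lemma g1311_16_25: "cc \<le> G 16 25 (1311/64)" unfolding cc_def
  by (rule check_G[OF _ ex1311 ch1311]) (simp_all add: L1311_def EnL_def EjL_def)
lemma g1313_16_25: "cc \<le> G 16 25 (1313/64)" unfolding cc_def
  by (rule check_G[OF _ ex1313 ch1313]) (simp_all add: L1313_def EnL_def EjL_def)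
lemma cell37: "\<forall>l. 1311/64 \<le> l \<and> l \<le> 1313/64 \<longrightarrow> cc \<le> FF l"
  by (intro allI impI, rule cell[of "1311/64" "1313/64" 16 25, OF _ _ _ _ _ g1311_16_25 g1313_16_25]) (simp_all add: power2_eq_square)
lemma g1313_17_25: "cc \<le> G 17 25 (1313/64)" unfolding cc_def
  by (rule check_G[OF _ ex1313 ch1313]) (simp_all add: L1313_def EnL_def EjL_def)
lemma g1369_17_25: "cc \<le> G 17 25 (1369/64)" unfolding cc_def
  by (rule check_G[OF _ ex1369 ch1369]) (simp_all add: L1369_def EnL_def EjL_def)
lemma cell38: "\<forall>l. 1313/64 \<le> l \<and> l \<le> 1369/64 \<longrightarrow> cc \<le> FF l"
  by (intro allI impI, rule cell[of "1313/64" "1369/64" 17 25, OF _ _ _ _ _ g1313_17_25 g1369_17_25]) (simp_all add: power2_eq_square)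
lemma g1369_17_26: "cc \<le> G 17 26 (1369/64)" unfolding cc_def
  by (rule check_G[OF _ ex1369 ch1369]) (simp_all add: L1369_def EnL_def EjL_def)
lemma g1385_17_26: "cc \<le> G 17 26 (1385/64)" unfolding cc_def
  by (rule check_G[OF _ ex1385 ch1385]) (simp_all add: L1385_def EnL_def EjL_def)
lemma cell39: "\<forall>l. 1369/64 \<le> l \<and> l \<le> 1385/64 \<longrightarrow> cc \<le> FF l"
  by (intro allI impI, rule cell[of "1369/64" "1385/64" 17 26, OF _ _ _ _ _ g1369_17_26 g1385_17_26]) (simp_all add: power2_eq_square)
lemma g1385_18_26: "cc \<le> G 18 26 (1385/64)" unfolding cc_def
  by (rule check_G[OF _ ex1385 ch1385]) (simp_all add: L1385_def EnL_def EjL_def)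
lemma g1426_18_26: "cc \<le> G 18 26 (713/32)" unfolding cc_def
  by (rule check_G[OF _ ex1426 ch1426]) (simp_all add: L1426_def EnL_def EjL_def)
lemma cell40: "\<forall>l. 1385/64 \<le> l \<and> l \<le> 713/32 \<longrightarrow> cc \<le> FF l"
  by (intro allI impI, rule cell[of "1385/64" "713/32" 18 26, OF _ _ _ _ _ g1385_18_26 g1426_18_26]) (simp_all add: power2_eq_square)
lemma g1426_18_27: "cc \<le> G 18 27 (713/32)" unfolding cc_def
  by (rule check_G[OF _ ex1426 ch1426]) (simp_all add: L1426_def EnL_def EjL_def)
lemma g1457_18_27: "cc \<le> G 18 27 (1457/64)" unfolding cc_def
  by (rule check_G[OF _ ex1457 ch1457]) (simp_all add: L1457_def EnL_def EjL_def)
lemma cell41: "\<forall>l. 713/32 \<le> l \<and> l \<le> 1457/64 \<longrightarrow> cc \<le> FF l"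
  by (intro allI impI, rule cell[of "713/32" "1457/64" 18 27, OF _ _ _ _ _ g1426_18_27 g1457_18_27]) (simp_all add: power2_eq_square)
lemma g1457_19_27: "cc \<le> G 19 27 (1457/64)" unfolding cc_def
  by (rule check_G[OF _ ex1457 ch1457]) (simp_all add: L1457_def EnL_def EjL_def)
lemma g1484_19_27: "cc \<le> G 19 27 (371/16)" unfolding cc_def
  by (rule check_G[OF _ ex1484 ch1484]) (simp_all add: L1484_def EnL_def EjL_def)
lemma cell42: "\<forall>l. 1457/64 \<le> l \<and> l \<le> 371/16 \<longrightarrow> cc \<le> FF l"
  by (intro allI impI, rule cell[of "1457/64" "371/16" 19 27, OF _ _ _ _ _ g1457_19_27 g1484_19_27]) (simp_all add: power2_eq_square)
lemma g1484_19_28: "cc \<le> G 19 28 (371/16)" unfolding cc_def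
  by (rule check_G[OF _ ex1484 ch1484]) (simp_all add: L1484_def EnL_def EjL_def)
lemma g1528_19_28: "cc \<le> G 19 28 (191/8)" unfolding cc_def
  by (rule check_G[OF _ ex1528 ch1528]) (simp_all add: L1528_def EnL_def EjL_def)
lemma cell43: "\<forall>l. 371/16 \<le> l \<and> l \<le> 191/8 \<longrightarrow> cc \<le> FF l"
  by (intro allI impI, rule cell[of "371/16" "191/8" 19 28, OF _ _ _ _ _ g1484_19_28 g1528_19_28]) (simp_all add: power2_eq_square)
lemma g1528_20_28: "cc \<le> G 20 28 (191/8)" unfolding cc_def
  by (rule check_G[OF _ ex1528 ch1528]) (simp_all add: L1528_def EnL_def EjL_def)
lemma g1542_20_28: "cc \<le> G 20 28 (771/32)" unfolding cc_def
  by (rule check_G[OF _ ex1542 ch1542]) (simp_all add: L1542_def EnL_def EjL_def)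
lemma cell44: "\<forall>l. 191/8 \<le> l \<and> l \<le> 771/32 \<longrightarrow> cc \<le> FF l"
  by (intro allI impI, rule cell[of "191/8" "771/32" 20 28, OF _ _ _ _ _ g1528_20_28 g1542_20_28]) (simp_all add: power2_eq_square)
lemma g1542_20_29: "cc \<le> G 20 29 (771/32)" unfolding cc_def
  by (rule check_G[OF _ ex1542 ch1542]) (simp_all add: L1542_def EnL_def EjL_def)
lemma g1600_20_29: "cc \<le> G 20 29 (25)" unfolding cc_def
  by (rule check_G[OF _ ex1600 ch1600]) (simp_all add: L1600_def EnL_def EjL_def)
lemma cell45: "\<forall>l. 771/32 \<le> l \<and> l \<le> 25 \<longrightarrow> cc \<le> FF l"
  by (intro allI impI, rule cell[of "771/32" "25" 20 29, OF _ _ _ _ _ g1542_20_29 g1600_20_29]) (simp_all add: power2_eq_square)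
lemma g1600_21_30: "cc \<le> G 21 30 (25)" unfolding cc_def
  by (rule check_G[OF _ ex1600 ch1600]) (simp_all add: L1600_def EnL_def EjL_def)
lemma g1659_21_30: "cc \<le> G 21 30 (1659/64)" unfolding cc_def
  by (rule check_G[OF _ ex1659 ch1659]) (simp_all add: L1659_def EnL_def EjL_def)
lemma cell46: "\<forall>l. 25 \<le> l \<and> l \<le> 1659/64 \<longrightarrow> cc \<le> FF l"
  by (intro allI impI, rule cell[of "25" "1659/64" 21 30, OF _ _ _ _ _ g1600_21_30 g1659_21_30]) (simp_all add: power2_eq_square)
lemma g1659_21_31: "cc \<le> G 21 31 (1659/64)" unfolding cc_def
  by (rule check_G[OF _ ex1659 ch1659]) (simp_all add: L1659_def EnL_def EjL_def)
lemma g1671_21_31: "cc \<le> G 21 31 (1671/64)" unfolding cc_def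
  by (rule check_G[OF _ ex1671 ch1671]) (simp_all add: L1671_def EnL_def EjL_def)
lemma cell47: "\<forall>l. 1659/64 \<le> l \<and> l \<le> 1671/64 \<longrightarrow> cc \<le> FF l"
  by (intro allI impI, rule cell[of "1659/64" "1671/64" 21 31, OF _ _ _ _ _ g1659_21_31 g1671_21_31]) (simp_all add: power2_eq_square)
lemma g1671_22_31: "cc \<le> G 22 31 (1671/64)" unfolding cc_def
  by (rule check_G[OF _ ex1671 ch1671]) (simp_all add: L1671_def EnL_def EjL_def)
lemma g1717_22_31: "cc \<le> G 22 31 (1717/64)" unfolding cc_def
  by (rule check_G[OF _ ex1717 ch1717]) (simp_all add: L1717_def EnL_def EjL_def)
lemma cell48: "\<forall>l. 1671/64 \<le> l \<and> l \<le> 1717/64 \<longrightarrow> cc \<le> FF l"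
  by (intro allI impI, rule cell[of "1671/64" "1717/64" 22 31, OF _ _ _ _ _ g1671_22_31 g1717_22_31]) (simp_all add: power2_eq_square)
lemma g1717_22_32: "cc \<le> G 22 32 (1717/64)" unfolding cc_def
  by (rule check_G[OF _ ex1717 ch1717]) (simp_all add: L1717_def EnL_def EjL_def)
lemma g1741_22_32: "cc \<le> G 22 32 (1741/64)" unfolding cc_def
  by (rule check_G[OF _ ex1741 ch1741]) (simp_all add: L1741_def EnL_def EjL_def)
lemma cell49: "\<forall>l. 1717/64 \<le> l \<and> l \<le> 1741/64 \<longrightarrow> cc \<le> FF l"
  by (intro allI impI, rule cell[of "1717/64" "1741/64" 22 32, OF _ _ _ _ _ g1717_22_32 g1741_22_32]) (simp_all add: power2_eq_square)
lemma g1741_23_32: "cc \<le> G 23 32 (1741/64)" unfolding cc_def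
  by (rule check_G[OF _ ex1741 ch1741]) (simp_all add: L1741_def EnL_def EjL_def)
lemma g1775_23_32: "cc \<le> G 23 32 (1775/64)" unfolding cc_def
  by (rule check_G[OF _ ex1775 ch1775]) (simp_all add: L1775_def EnL_def EjL_def)
lemma cell50: "\<forall>l. 1741/64 \<le> l \<and> l \<le> 1775/64 \<longrightarrow> cc \<le> FF l"
  by (intro allI impI, rule cell[of "1741/64" "1775/64" 23 32, OF _ _ _ _ _ g1741_23_32 g1775_23_32]) (simp_all add: power2_eq_square)
lemma g1775_23_33: "cc \<le> G 23 33 (1775/64)" unfolding cc_def
  by (rule check_G[OF _ ex1775 ch1775]) (simp_all add: L1775_def EnL_def EjL_def)
lemma g1812_23_33: "cc \<le> G 23 33 (453/16)" unfolding cc_def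
  by (rule check_G[OF _ ex1812 ch1812]) (simp_all add: L1812_def EnL_def EjL_def)
lemma cell51: "\<forall>l. 1775/64 \<le> l \<and> l \<le> 453/16 \<longrightarrow> cc \<le> FF l"
  by (intro allI impI, rule cell[of "1775/64" "453/16" 23 33, OF _ _ _ _ _ g1775_23_33 g1812_23_33]) (simp_all add: power2_eq_square)
lemma g1812_24_33: "cc \<le> G 24 33 (453/16)" unfolding cc_def
  by (rule check_G[OF _ ex1812 ch1812]) (simp_all add: L1812_def EnL_def EjL_def)
lemma g1834_24_33: "cc \<le> G 24 33 (917/32)" unfolding cc_def
  by (rule check_G[OF _ ex1834 ch1834]) (simp_all add: L1834_def EnL_def EjL_def)
lemma cell52: "\<forall>l. 453/16 \<le> l \<and> l \<le> 917/32 \<longrightarrow> cc \<le> FF l"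
  by (intro allI impI, rule cell[of "453/16" "917/32" 24 33, OF _ _ _ _ _ g1812_24_33 g1834_24_33]) (simp_all add: power2_eq_square)
lemma g1834_24_34: "cc \<le> G 24 34 (917/32)" unfolding cc_def
  by (rule check_G[OF _ ex1834 ch1834]) (simp_all add: L1834_def EnL_def EjL_def)
lemma g1883_24_34: "cc \<le> G 24 34 (1883/64)" unfolding cc_def
  by (rule check_G[OF _ ex1883 ch1883]) (simp_all add: L1883_def EnL_def EjL_def)
lemma cell53: "\<forall>l. 917/32 \<le> l \<and> l \<le> 1883/64 \<longrightarrow> cc \<le> FF l"
  by (intro allI impI, rule cell[of "917/32" "1883/64" 24 34, OF _ _ _ _ _ g1834_24_34 g1883_24_34]) (simp_all add: power2_eq_square)
lemma g1883_25_34: "cc \<le> G 25 34 (1883/64)" unfolding cc_def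
  by (rule check_G[OF _ ex1883 ch1883]) (simp_all add: L1883_def EnL_def EjL_def)
lemma g1893_25_34: "cc \<le> G 25 34 (1893/64)" unfolding cc_def
  by (rule check_G[OF _ ex1893 ch1893]) (simp_all add: L1893_def EnL_def EjL_def)
lemma cell54: "\<forall>l. 1883/64 \<le> l \<and> l \<le> 1893/64 \<longrightarrow> cc \<le> FF l"
  by (intro allI impI, rule cell[of "1883/64" "1893/64" 25 34, OF _ _ _ _ _ g1883_25_34 g1893_25_34]) (simp_all add: power2_eq_square)
lemma g1893_25_35: "cc \<le> G 25 35 (1893/64)" unfolding cc_def
  by (rule check_G[OF _ ex1893 ch1893]) (simp_all add: L1893_def EnL_def EjL_def)
lemma g1951_25_35: "cc \<le> G 25 35 (1951/64)" unfolding cc_def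
  by (rule check_G[OF _ ex1951 ch1951]) (simp_all add: L1951_def EnL_def EjL_def)
lemma cell55: "\<forall>l. 1893/64 \<le> l \<and> l \<le> 1951/64 \<longrightarrow> cc \<le> FF l"
  by (intro allI impI, rule cell[of "1893/64" "1951/64" 25 35, OF _ _ _ _ _ g1893_25_35 g1951_25_35]) (simp_all add: power2_eq_square)
lemma g1951_25_36: "cc \<le> G 25 36 (1951/64)" unfolding cc_def
  by (rule check_G[OF _ ex1951 ch1951]) (simp_all add: L1951_def EnL_def EjL_def)
lemma g1953_25_36: "cc \<le> G 25 36 (1953/64)" unfolding cc_def
  by (rule check_G[OF _ ex1953 ch1953]) (simp_all add: L1953_def EnL_def EjL_def)
lemma cell56: "\<forall>l. 1951/64 \<le> l \<and> l \<le> 1953/64 \<longrightarrow> cc \<le> FF l"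
  by (intro allI impI, rule cell[of "1951/64" "1953/64" 25 36, OF _ _ _ _ _ g1951_25_36 g1953_25_36]) (simp_all add: power2_eq_square)
lemma g1953_26_36: "cc \<le> G 26 36 (1953/64)" unfolding cc_def
  by (rule check_G[OF _ ex1953 ch1953]) (simp_all add: L1953_def EnL_def EjL_def)
lemma g2010_26_36: "cc \<le> G 26 36 (1005/32)" unfolding cc_def
  by (rule check_G[OF _ ex2010 ch2010]) (simp_all add: L2010_def EnL_def EjL_def)
lemma cell57: "\<forall>l. 1953/64 \<le> l \<and> l \<le> 1005/32 \<longrightarrow> cc \<le> FF l"
  by (intro allI impI, rule cell[of "1953/64" "1005/32" 26 36, OF _ _ _ _ _ g1953_26_36 g2010_26_36]) (simp_all add: power2_eq_square)
lemma g2010_26_37: "cc \<le> G 26 37 (1005/32)" unfolding cc_def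
  by (rule check_G[OF _ ex2010 ch2010]) (simp_all add: L2010_def EnL_def EjL_def)
lemma g2023_26_37: "cc \<le> G 26 37 (2023/64)" unfolding cc_def
  by (rule check_G[OF _ ex2023 ch2023]) (simp_all add: L2023_def EnL_def EjL_def)
lemma cell58: "\<forall>l. 1005/32 \<le> l \<and> l \<le> 2023/64 \<longrightarrow> cc \<le> FF l"
  by (intro allI impI, rule cell[of "1005/32" "2023/64" 26 37, OF _ _ _ _ _ g2010_26_37 g2023_26_37]) (simp_all add: power2_eq_square)
lemma g2023_27_37: "cc \<le> G 27 37 (2023/64)" unfolding cc_def
  by (rule check_G[OF _ ex2023 ch2023]) (simp_all add: L2023_def EnL_def EjL_def)
lemma g2069_27_37: "cc \<le> G 27 37 (2069/64)" unfolding cc_def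
  by (rule check_G[OF _ ex2069 ch2069]) (simp_all add: L2069_def EnL_def EjL_def)
lemma cell59: "\<forall>l. 2023/64 \<le> l \<and> l \<le> 2069/64 \<longrightarrow> cc \<le> FF l"
  by (intro allI impI, rule cell[of "2023/64" "2069/64" 27 37, OF _ _ _ _ _ g2023_27_37 g2069_27_37]) (simp_all add: power2_eq_square)
lemma g2069_27_38: "cc \<le> G 27 38 (2069/64)" unfolding cc_def
  by (rule check_G[OF _ ex2069 ch2069]) (simp_all add: L2069_def EnL_def EjL_def)
lemma g2094_27_38: "cc \<le> G 27 38 (1047/32)" unfolding cc_def
  by (rule check_G[OF _ ex2094 ch2094]) (simp_all add: L2094_def EnL_def EjL_def)
lemma cell60: "\<forall>l. 2069/64 \<le> l \<and> l \<le> 1047/32 \<longrightarrow> cc \<le> FF l"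
  by (intro allI impI, rule cell[of "2069/64" "1047/32" 27 38, OF _ _ _ _ _ g2069_27_38 g2094_27_38]) (simp_all add: power2_eq_square)
lemma g2094_28_38: "cc \<le> G 28 38 (1047/32)" unfolding cc_def
  by (rule check_G[OF _ ex2094 ch2094]) (simp_all add: L2094_def EnL_def EjL_def)
lemma g2128_28_38: "cc \<le> G 28 38 (133/4)" unfolding cc_def
  by (rule check_G[OF _ ex2128 ch2128]) (simp_all add: L2128_def EnL_def EjL_def)
lemma cell61: "\<forall>l. 1047/32 \<le> l \<and> l \<le> 133/4 \<longrightarrow> cc \<le> FF l"
  by (intro allI impI, rule cell[of "1047/32" "133/4" 28 38, OF _ _ _ _ _ g2094_28_38 g2128_28_38]) (simp_all add: power2_eq_square)
lemma g2128_28_39: "cc \<le> G 28 39 (133/4)" unfolding cc_def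
  by (rule check_G[OF _ ex2128 ch2128]) (simp_all add: L2128_def EnL_def EjL_def)
lemma g2164_28_39: "cc \<le> G 28 39 (541/16)" unfolding cc_def
  by (rule check_G[OF _ ex2164 ch2164]) (simp_all add: L2164_def EnL_def EjL_def)
lemma cell62: "\<forall>l. 133/4 \<le> l \<and> l \<le> 541/16 \<longrightarrow> cc \<le> FF l"
  by (intro allI impI, rule cell[of "133/4" "541/16" 28 39, OF _ _ _ _ _ g2128_28_39 g2164_28_39]) (simp_all add: power2_eq_square)
lemma g2164_29_39: "cc \<le> G 29 39 (541/16)" unfolding cc_def
  by (rule check_G[OF _ ex2164 ch2164]) (simp_all add: L2164_def EnL_def EjL_def)
lemma g2186_29_39: "cc \<le> G 29 39 (1093/32)" unfolding cc_def
  by (rule check_G[OF _ ex2186 ch2186]) (simp_all add: L2186_def EnL_def EjL_def)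
lemma cell63: "\<forall>l. 541/16 \<le> l \<and> l \<le> 1093/32 \<longrightarrow> cc \<le> FF l"
  by (intro allI impI, rule cell[of "541/16" "1093/32" 29 39, OF _ _ _ _ _ g2164_29_39 g2186_29_39]) (simp_all add: power2_eq_square)
lemma g2186_29_40: "cc \<le> G 29 40 (1093/32)" unfolding cc_def
  by (rule check_G[OF _ ex2186 ch2186]) (simp_all add: L2186_def EnL_def EjL_def)
lemma g2234_29_40: "cc \<le> G 29 40 (1117/32)" unfolding cc_def
  by (rule check_G[OF _ ex2234 ch2234]) (simp_all add: L2234_def EnL_def EjL_def)
lemma cell64: "\<forall>l. 1093/32 \<le> l \<and> l \<le> 1117/32 \<longrightarrow> cc \<le> FF l"
  by (intro allI impI, rule cell[of "1093/32" "1117/32" 29 40, OF _ _ _ _ _ g2186_29_40 g2234_29_40]) (simp_all add: power2_eq_square)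
lemma g2234_30_40: "cc \<le> G 30 40 (1117/32)" unfolding cc_def
  by (rule check_G[OF _ ex2234 ch2234]) (simp_all add: L2234_def EnL_def EjL_def)
lemma g2245_30_40: "cc \<le> G 30 40 (2245/64)" unfolding cc_def
  by (rule check_G[OF _ ex2245 ch2245]) (simp_all add: L2245_def EnL_def EjL_def)
lemma cell65: "\<forall>l. 1117/32 \<le> l \<and> l \<le> 2245/64 \<longrightarrow> cc \<le> FF l"
  by (intro allI impI, rule cell[of "1117/32" "2245/64" 30 40, OF _ _ _ _ _ g2234_30_40 g2245_30_40]) (simp_all add: power2_eq_square)
lemma g2245_30_41: "cc \<le> G 30 41 (2245/64)" unfolding cc_def
  by (rule check_G[OF _ ex2245 ch2245]) (simp_all add: L2245_def EnL_def EjL_def)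
lemma g2304_30_41: "cc \<le> G 30 41 (36)" unfolding cc_def
  by (rule check_G[OF _ ex2304 ch2304]) (simp_all add: L2304_def EnL_def EjL_def)
lemma cell66: "\<forall>l. 2245/64 \<le> l \<and> l \<le> 36 \<longrightarrow> cc \<le> FF l"
  by (intro allI impI, rule cell[of "2245/64" "36" 30 41, OF _ _ _ _ _ g2245_30_41 g2304_30_41]) (simp_all add: power2_eq_square)
lemma join_ivl: "(\<forall>l. a \<le> l \<and> l \<le> b \<longrightarrow> P l) \<Longrightarrow> (\<forall>l. b \<le> l \<and> l \<le> c \<longrightarrow> P l) \<Longrightarrow> (\<forall>l. a \<le> l \<and> l \<le> (c::real) \<longrightarrow> P l)"
  by (metis linear)
lemma numeric_range: "\<forall>l. 1/4 \<le> l \<and> l \<le> 36 \<longrightarrow> cc \<le> FF l"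
proof -
  note c = cell0
  note c = join_ivl[OF c cell1]
  note c = join_ivl[OF c cell2]
  note c = join_ivl[OF c cell3]
  note c = join_ivl[OF c cell4]
  note c = join_ivl[OF c cell5]
  note c = join_ivl[OF c cell6]
  note c = join_ivl[OF c cell7]
  note c = join_ivl[OF c cell8]
  note c = join_ivl[OF c cell9]
  note c = join_ivl[OF c cell10]
  note c = join_ivl[OF c cell11]
  note c = join_ivl[OF c cell12]
  note c = join_ivl[OF c cell13]
  note c = join_ivl[OF c cell14]
  note c = join_ivl[OF c cell15]
  note c = join_ivl[OF c cell16]
  note c = join_ivl[OF c cell17]
  note c = join_ivl[OF c cell18]
  note c = join_ivl[OF c cell19]
  note c = join_ivl[OF c cell20]
  note c = join_ivl[OF c cell21]
  note c = join_ivl[OF c cell22]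
  note c = join_ivl[OF c cell23]
  note c = join_ivl[OF c cell24]
  note c = join_ivl[OF c cell25]
  note c = join_ivl[OF c cell26]
  note c = join_ivl[OF c cell27]
  note c = join_ivl[OF c cell28]
  note c = join_ivl[OF c cell29]
  note c = join_ivl[OF c cell30]
  note c = join_ivl[OF c cell31]
  note c = join_ivl[OF c cell32]
  note c = join_ivl[OF c cell33]
  note c = join_ivl[OF c cell34]
  note c = join_ivl[OF c cell35]
  note c = join_ivl[OF c cell36]
  note c = join_ivl[OF c cell37]
  note c = join_ivl[OF c cell38]
  note c = join_ivl[OF c cell39]
  note c = join_ivl[OF c cell40]
  note c = join_ivl[OF c cell41]
  note c = join_ivl[OF c cell42]
  note c = join_ivl[OF c cell43]
  note c = join_ivl[OF c cell44]
  note c = join_ivl[OF c cell45]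
  note c = join_ivl[OF c cell46]
  note c = join_ivl[OF c cell47]
  note c = join_ivl[OF c cell48]
  note c = join_ivl[OF c cell49]
  note c = join_ivl[OF c cell50]
  note c = join_ivl[OF c cell51]
  note c = join_ivl[OF c cell52]
  note c = join_ivl[OF c cell53]
  note c = join_ivl[OF c cell54]
  note c = join_ivl[OF c cell55]
  note c = join_ivl[OF c cell56]
  note c = join_ivl[OF c cell57]
  note c = join_ivl[OF c cell58]
  note c = join_ivl[OF c cell59]
  note c = join_ivl[OF c cell60]
  note c = join_ivl[OF c cell61]
  note c = join_ivl[OF c cell62]
  note c = join_ivl[OF c cell63]
  note c = join_ivl[OF c cell64]
  note c = join_ivl[OF c cell65]
  note c = join_ivl[OF c cell66]
  show ?thesis using c by simp
qed



lemma poly1: fixes s x l :: real assumes "6 \<le> s" "s - 1/8 \<le> x" "l = s^2"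
  shows "0 \<le> (x^2+2 * l) * (l+x+1/8) * ((x+1)^3+3 * l * (x+1)) - (x^3+3 * l * x) * ((x+1)^3+3 * l * (x+1)) - l * ((x+1)^2+2 * l) * (x^3+3 * l * x)"
proof -
  define a where "a = s - 6"
  define b where "b = x - s + 1/8"
  have a: "0 \<le> a" and b: "0 \<le> b" using assms by (auto simp: a_def b_def)
  have s: "s = a + 6" and x: "x = a + b + 6 - 1/8" by (auto simp: a_def b_def)
  have "(x^2+2 * l) * (l+x+1/8) * ((x+1)^3+3 * l * (x+1)) - (x^3+3 * l * x) * ((x+1)^3+3 * l * (x+1)) - l * ((x+1)^2+2 * l) * (x^3+3 * l * x) = ((75168179527/262144) + (9307429/32768) * b + (140147/2048) * b^2 + (9941/256) * b^3 + (259/64) * b^4 + (1/8) * b^5 + (9342598981/32768) * a + (197147/1024) * a * b + (6831/256) * a * b^2 + (187/16) * a * b^3 + (5/8) * a * b^4 + (484156961/4096) * a^2 + (25349/512) * a^2 * b + (211/64) * a^2 * b^2 + (7/8) * a^2 * b^3 + (13390545/512) * a^3 + (183/32) * a^3 * b + (1/8) * a^3 * b^2 + (104231/32) * a^4 + (1/4) * a^4 * b + (433/2) * a^5 + 6 * a^6)"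
    unfolding assms(3) s x by algebra
  moreover have "0 \<le> ((75168179527/262144) + (9307429/32768) * b + (140147/2048) * b^2 + (9941/256) * b^3 + (259/64) * b^4 + (1/8) * b^5 + (9342598981/32768) * a + (197147/1024) * a * b + (6831/256) * a * b^2 + (187/16) * a * b^3 + (5/8) * a * b^4 + (484156961/4096) * a^2 + (25349/512) * a^2 * b + (211/64) * a^2 * b^2 + (7/8) * a^2 * b^3 + (13390545/512) * a^3 + (183/32) * a^3 * b + (1/8) * a^3 * b^2 + (104231/32) * a^4 + (1/4) * a^4 * b + (433/2) * a^5 + 6 * a^6)" using a b by (intro add_nonneg_nonneg mult_nonneg_nonneg zero_le_power) auto
  ultimately show ?thesis by simp
qed

lemma poly2: fixes s y l :: real assumes "6 \<le> s" "s + 1 \<le> y" "l = s^2"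
  shows "0 \<le> l^2 * (y^2+2 * l) * ((y+1)^3+3 * l * (y+1)) - (l - y + 1) * (((y+1)^3+3 * l * (y+1)) + l * ((y+1)^2+2 * l)) * (y^3+3 * l * y)"
proof -
  define a where "a = s - 6"
  define b where "b = y - s - 1"
  have a: "0 \<le> a" and b: "0 \<le> b" using assms by (auto simp: a_def b_def)
  have s: "s = a + 6" and y: "y = a + b + 7" by (auto simp: a_def b_def)
  have "l^2 * (y^2+2 * l) * ((y+1)^3+3 * l * (y+1)) - (l - y + 1) * (((y+1)^3+3 * l * (y+1)) + l * ((y+1)^2+2 * l)) * (y^3+3 * l * y) = (8990976 + 2041352 * b + 921204 * b^2 + 170094 * b^3 + 18585 * b^4 + 1257 * b^5 + 51 * b^6 + 1 * b^7 + 11936072 * a + 1735824 * a * b + 671142 * a * b^2 + 98472 * a * b^3 + 7989 * a * b^4 + 354 * a * b^5 + 7 * a * b^6 + 6989644 * a^2 + 612160 * a^2 * b + 195727 * a^2 * b^2 + 21397 * a^2 * b^3 + 1147 * a^2 * b^4 + 25 * a^2 * b^5 + 2354152 * a^3 + 114482 * a^3 * b + 28563 * a^3 * b^2 + 2068 * a^3 * b^3 + 55 * a^3 * b^4 + 498038 * a^4 + 11957 * a^4 * b + 2086 * a^4 * b^2 + 75 * a^4 * b^3 + 67683 * a^5 + 660 * a^5 * b + 61 * a^5 * b^2 + 5764 * a^6 + 15 * a^6 * b + 281 * a^7 + 6 * a^8)"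
    unfolding assms(3) s y by algebra
  moreover have "0 \<le> (8990976 + 2041352 * b + 921204 * b^2 + 170094 * b^3 + 18585 * b^4 + 1257 * b^5 + 51 * b^6 + 1 * b^7 + 11936072 * a + 1735824 * a * b + 671142 * a * b^2 + 98472 * a * b^3 + 7989 * a * b^4 + 354 * a * b^5 + 7 * a * b^6 + 6989644 * a^2 + 612160 * a^2 * b + 195727 * a^2 * b^2 + 21397 * a^2 * b^3 + 1147 * a^2 * b^4 + 25 * a^2 * b^5 + 2354152 * a^3 + 114482 * a^3 * b + 28563 * a^3 * b^2 + 2068 * a^3 * b^3 + 55 * a^3 * b^4 + 498038 * a^4 + 11957 * a^4 * b + 2086 * a^4 * b^2 + 75 * a^4 * b^3 + 67683 * a^5 + 660 * a^5 * b + 61 * a^5 * b^2 + 5764 * a^6 + 15 * a^6 * b + 281 * a^7 + 6 * a^8)" using a b by (intro add_nonneg_nonneg mult_nonneg_nonneg zero_le_power) auto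
  ultimately show ?thesis by simp
qed

lemma poly3: fixes s :: real assumes "6 \<le> s"
  shows "0 \<le> (s-1) * (6 * s^2+(s-2) * (2 * s-1)) * ((s-1/8)^3+3 * s^2 * (s-1/8)) - 31/25 * 6 * s^2 * s^2 * ((s-1/8)^2+2 * s^2)"
proof -
  define a where "a = s - 6"
  have a: "0 \<le> a" using assms by (auto simp: a_def)
  have s: "s = a + 6" by (auto simp: a_def)
  have "(s-1) * (6 * s^2+(s-2) * (2 * s-1)) * ((s-1/8)^3+3 * s^2 * (s-1/8)) - 31/25 * 6 * s^2 * s^2 * ((s-1/8)^2+2 * s^2) = ((196524371/3200) + (1525837757/12800) * a + (958448557/12800) * a^2 + (4501107/200) * a^3 + (2864807/800) * a^4 + (14617/50) * a^5 + (242/25) * a^6)"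
    unfolding s by algebra
  moreover have "0 \<le> ((196524371/3200) + (1525837757/12800) * a + (958448557/12800) * a^2 + (4501107/200) * a^3 + (2864807/800) * a^4 + (14617/50) * a^5 + (242/25) * a^6)" using a by (intro add_nonneg_nonneg mult_nonneg_nonneg zero_le_power) auto
  ultimately show ?thesis by simp
qed

lemma poly4: fixes s :: real assumes "6 \<le> s"
  shows "0 \<le> (s-1) * (4 * s-1) * ((s+1)^3+3 * s^2 * (s+1)) - 3 * s * (31/25) * (((s+1)^3+3 * s^2 * (s+1)) + s^2 * ((s+1)^2+2 * s^2))"
proof -
  define a where "a = s - 6"
  have a: "0 \<le> a" using assms by (auto simp: a_def)
  have s: "s = a + 6" by (auto simp: a_def)
  have "(s-1) * (4 * s-1) * ((s+1)^3+3 * s^2 * (s+1)) - 3 * s * (31/25) * (((s+1)^3+3 * s^2 * (s+1)) + s^2 * ((s+1)^2+2 * s^2)) = ((23147/5) + (275269/25) * a + (28802/5) * a^2 + (31567/25) * a^3 + (3172/25) * a^4 + (121/25) * a^5)"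
    unfolding s by algebra
  moreover have "0 \<le> ((23147/5) + (275269/25) * a + (28802/5) * a^2 + (31567/25) * a^3 + (3172/25) * a^4 + (121/25) * a^5)" using a by (intro add_nonneg_nonneg mult_nonneg_nonneg zero_le_power) auto
  ultimately show ?thesis by simp
qed



definition Hf :: "real \<Rightarrow> real \<Rightarrow> real" where "Hf l x = l * (x^2 + 2* l) / (x^3 + 3* l* x)"

lemma div_le_div_cross:
  fixes a b c d :: real
  assumes "0 < b" "0 < d" "a * d \<le> c * b"
  shows "a / b \<le> c / d"
proof -
  have "a / b = (a * d) / (b * d)" using assms by simp
  also have "\<dots> \<le> (c * b) / (b * d)" using assms by (intro divide_right_mono) auto
  also have "\<dots> = c / d" using assms by simp
  finally show ?thesis .
qed

lemma D_pos: "0 < x \<Longrightarrow> 0 < l \<Longrightarrow> 0 < x^3 + 3* l*(x::real)"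
  by (simp add: add_pos_pos)

lemma Hf_nonneg: "0 < x \<Longrightarrow> 0 < l \<Longrightarrow> 0 \<le> Hf l x"
  unfolding Hf_def by (intro divide_nonneg_pos mult_nonneg_nonneg add_nonneg_nonneg D_pos) auto

lemma Hf_mono:
  assumes "0 < l" "0 < y" "y \<le> x"
  shows "Hf l x \<le> Hf l y"
proof -
  have x: "0 < x" using assms by simp
  have id: "(y^2 + 2* l) * (x^3 + 3* l* x) - (x^2 + 2* l) * (y^3 + 3* l* y)
      = (x - y) * (x^2* y^2 + l*((x-y)^2 + x^2 + y^2 + x* y) + 6* l^2)"
    by algebra
  have "0 \<le> (x - y) * (x^2* y^2 + l*((x-y)^2 + x^2 + y^2 + x* y) + 6* l^2)"
    using assms x by (intro mult_nonneg_nonneg add_nonneg_nonneg) auto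
  then have "(x^2 + 2* l) * (y^3 + 3* l* y) \<le> (y^2 + 2* l) * (x^3 + 3* l* x)"
    using id by linarith
  then have "l * (x^2 + 2* l) * (y^3 + 3* l* y) \<le> l * (y^2 + 2* l) * (x^3 + 3* l* x)"
    using assms by (simp add: mult.assoc mult_left_mono)
  then show ?thesis unfolding Hf_def
    by (intro div_le_div_cross D_pos assms x)
qed

lemma Hf_super_up:
  assumes "6 \<le> s" "l = s^2" "s - 1/8 \<le> x"
  shows "l * (1 + Hf l (x + 1)) \<le> Hf l x * (l + x + 1/8)"
proof -
  have l: "0 < l" using assms by simp
  have x: "0 < x" using assms by simp
  define N0 where "N0 = x^2 + 2* l"
  define D0 where "D0 = x^3 + 3* l* x"
  define N1 where "N1 = (x+1)^2 + 2* l"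
  define D1 where "D1 = (x+1)^3 + 3* l*(x+1)"
  have D0: "0 < D0" unfolding D0_def using x l by (rule D_pos)
  have D1: "0 < D1" unfolding D1_def using x l by (intro D_pos) auto
  have P: "0 \<le> N0 * (l+x+1/8) * D1 - D0 * D1 - l * N1 * D0"
    using poly1[OF assms(1) assms(3) assms(2)] unfolding N0_def D0_def N1_def D1_def .
  have "(l * D1 + l * (l * N1)) * D0 \<le> l * N0 * (l + x + 1/8) * D1"
  proof -
    have "l * N0 * (l + x + 1/8) * D1 - (l * D1 + l * (l * N1)) * D0 = l * (N0 * (l+x+1/8) * D1 - D0 * D1 - l * N1 * D0)"
      by algebra
    moreover have "0 \<le> l * (N0 * (l+x+1/8) * D1 - D0 * D1 - l * N1 * D0)" using P l by simp
    ultimately show ?thesis by linarith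
  qed
  then have "(l * D1 + l * (l * N1)) / D1 \<le> l * N0 * (l + x + 1/8) / D0"
    by (intro div_le_div_cross D0 D1)
  moreover have "l * (1 + Hf l (x + 1)) = (l * D1 + l * (l * N1)) / D1"
    unfolding Hf_def N1_def D1_def using D1 unfolding D1_def by (simp add: field_simps)
  moreover have "Hf l x * (l + x + 1/8) = l * N0 * (l + x + 1/8) / D0"
    unfolding Hf_def N0_def D0_def by simp
  ultimately show ?thesis by simp
qed

lemma Hf_super_low:
  assumes "6 \<le> s" "l = s^2" "s + 1 \<le> y"
  shows "(l - y + 1) * (1 + Hf l (y + 1)) \<le> l * Hf l y"
proof -
  have l: "0 < l" using assms by simp
  have y: "0 < y" using assms by simp
  define N0 where "N0 = y^2 + 2* l"
  define D0 where "D0 = y^3 + 3* l* y"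
  define N1 where "N1 = (y+1)^2 + 2* l"
  define D1 where "D1 = (y+1)^3 + 3* l*(y+1)"
  have D0: "0 < D0" unfolding D0_def using y l by (rule D_pos)
  have D1: "0 < D1" unfolding D1_def using y l by (intro D_pos) auto
  have P: "0 \<le> l^2 * N0 * D1 - (l - y + 1) * (D1 + l * N1) * D0"
    using poly2[OF assms(1) assms(3) assms(2)] unfolding N0_def D0_def N1_def D1_def .
  have "((l - y + 1) * (D1 + l * N1)) * D0 \<le> (l * (l * N0)) * D1"
    using P by (simp add: power2_eq_square algebra_simps)
  then have "((l - y + 1) * (D1 + l * N1)) / D1 \<le> (l * (l * N0)) / D0"
    by (intro div_le_div_cross D0 D1)
  moreover have "(l - y + 1) * (1 + Hf l (y + 1)) = ((l - y + 1) * (D1 + l * N1)) / D1"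
    unfolding Hf_def N1_def D1_def using D1 unfolding D1_def by (simp add: field_simps)
  moreover have "l * Hf l y = (l * (l * N0)) / D0"
    unfolding Hf_def N0_def D0_def by simp
  ultimately show ?thesis by simp
qed

lemma final_up:
  assumes "6 \<le> s" "l = s^2"
  shows "31/25 * Hf l (s - 1/8) \<le> (s-1)*(1 + (s-2)*(2* s-1)/(6* l))"
proof -
  have l: "0 < l" using assms by simp
  define x where "x = s - 1/8"
  have x: "0 < x" using assms by (simp add: x_def)
  have P: "31/25*6* s^2* s^2*(x^2+2* s^2) \<le> (s-1)*(6* s^2+(s-2)*(2* s-1))*(x^3+3* s^2* x)"
    using poly3[OF assms(1)] unfolding x_def by simp
  have eq: "((s-1)*(6* l+(s-2)*(2* s-1))) * (x^3 + 3* l* x) - (31/25 * (l * (x^2 + 2* l))) * (6* l)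
      = (s-1)*(6* s^2+(s-2)*(2* s-1))*(x^3+3* s^2* x) - 31/25*6* s^2* s^2*(x^2+2* s^2)"
    unfolding assms(2) by algebra
  have "(31/25 * (l * (x^2 + 2* l))) * (6* l) \<le> ((s-1)*(6* l+(s-2)*(2* s-1))) * (x^3 + 3* l* x)"
    using P eq by linarith
  then have "31/25 * (l * (x^2 + 2* l)) / (x^3 + 3* l* x) \<le> ((s-1)*(6* l+(s-2)*(2* s-1))) / (6* l)"
    by (intro div_le_div_cross D_pos x l) (use l in auto)
  moreover have "(s-1)*(1 + (s-2)*(2* s-1)/(6* l)) = ((s-1)*(6* l+(s-2)*(2* s-1))) / (6* l)"
    using l by (simp add: field_simps)
  ultimately show ?thesis unfolding Hf_def x_def by simp
qed

lemma final_low: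
  assumes "6 \<le> s" "l = s^2"
  shows "31/25 * (1 + Hf l (s + 1)) \<le> (s-1)*(1 + (s-1)/(3* s))"
proof -
  have l: "0 < l" using assms by simp
  have s: "0 < s" using assms by simp
  define x where "x = s + 1"
  have x: "0 < x" using assms by (simp add: x_def)
  have P: "3* s*(31/25)*((x^3+3* s^2* x) + s^2*(x^2+2* s^2)) \<le> (s-1)*(4* s-1)*(x^3+3* s^2* x)"
    using poly4[OF assms(1)] unfolding x_def by simp
  have eq: "((s-1)*(4* s-1)) * (x^3 + 3* l* x) - (31/25 * ((x^3 + 3* l* x) + l * (x^2 + 2* l))) * (3* s)
      = (s-1)*(4* s-1)*(x^3+3* s^2* x) - 3* s*(31/25)*((x^3+3* s^2* x) + s^2*(x^2+2* s^2))"
    unfolding assms(2) by algebra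
  have "(31/25 * ((x^3 + 3* l* x) + l * (x^2 + 2* l))) * (3* s) \<le> ((s-1)*(4* s-1)) * (x^3 + 3* l* x)"
    using P eq by linarith
  then have ineq: "31/25 * ((x^3 + 3* l* x) + l * (x^2 + 2* l)) / (x^3 + 3* l* x) \<le> ((s-1)*(4* s-1)) / (3* s)"
    by (intro div_le_div_cross D_pos x l) (use s in auto)
  have "31/25 * (1 + Hf l (s + 1)) = 31/25 * ((x^3 + 3* l* x) + l * (x^2 + 2* l)) / (x^3 + 3* l* x)"
    unfolding Hf_def x_def[symmetric] using D_pos[OF x l] by (simp add: field_simps)
  also have "\<dots> \<le> ((s-1)*(4* s-1)) / (3* s)" by (rule ineq)
  also have "\<dots> = (s-1)*(1 + (s-1)/(3* s))"
    using s by (simp add: field_simps)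
  finally show ?thesis .
qed



lemma PP_Suc: "PP l (Suc k) = PP l k * l / real (Suc k)"
  unfolding PP_def by (simp add: fact_Suc field_simps del: of_nat_Suc)

lemma PP_sums: "(\<lambda>k. PP l k) sums 1"
proof -
  have "(\<lambda>n. l^n / fact n * exp (-l)) sums (exp l * exp (-l))"
    by (intro sums_mult2 exp_series_real)
  then show ?thesis by (simp add: PP_def mult_exp_exp)
qed

locale big =
  fixes l s :: real
  assumes l36: "36 \<le> l" and sdef: "s = sqrt l"
begin

lemma s6: "6 \<le> s"
proof -
  have "(6::real)^2 \<le> l" using l36 by simp
  then have "6 \<le> sqrt l" by (rule real_le_rsqrt)
  then show ?thesis using sdef by simp
qed

lemma ls: "l = s^2" using l36 sdef by simp

lemma lpos: "0 < l" using l36 by simp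

definition K2 :: nat where "K2 = nat \<lfloor>l + s\<rfloor>"
definition m :: nat where "m = nat \<lfloor>l\<rfloor>"
definition K1 :: nat where "K1 = nat \<lceil>l - s\<rceil>"

lemma K2_le: "real K2 \<le> l + s" and K2_gt: "l + s < real K2 + 1"
proof -
  have "0 \<le> \<lfloor>l + s\<rfloor>" using l36 s6 by simp
  then have "real K2 = real_of_int \<lfloor>l + s\<rfloor>" unfolding K2_def by simp
  then show "real K2 \<le> l + s" "l + s < real K2 + 1" by linarith+
qed

lemma m_le: "real m \<le> l" and m_gt: "l < real m + 1"
proof -
  have "0 \<le> \<lfloor>l\<rfloor>" using l36 by simp
  then have "real m = real_of_int \<lfloor>l\<rfloor>" unfolding m_def by simp
  then show "real m \<le> l" "l < real m + 1" by linarith+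
qed

lemma K1_ge: "l - s \<le> real K1" and K1_lt: "real K1 < l - s + 1"
proof -
  have "1 \<le> sqrt l" using l36 by simp
  then have "sqrt l * 1 \<le> sqrt l * sqrt l" by (intro mult_left_mono) auto
  then have "sqrt l \<le> l" using l36 by simp
  then have "0 \<le> \<lceil>l - s\<rceil>" using sdef by simp
  then have "real K1 = real_of_int \<lceil>l - s\<rceil>" unfolding K1_def by simp
  then show "l - s \<le> real K1" "real K1 < l - s + 1" by linarith+
qed


lemma mK2: "m < K2" using m_le K2_gt s6 by linarith

lemma up_partial: "K2 \<le> k \<Longrightarrow> (\<Sum>j<N. PP l (Suc k + j)) \<le> Hf l (real k + 1 - l - 1/8) * PP l k"
proof (induction N arbitrary: k)
  case 0
  have "real K2 \<le> real k" using 0 by simp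
  then have "0 < real k + 1 - l - 1/8" using K2_gt s6 by linarith
  then show ?case using Hf_nonneg[OF _ lpos] PP_nonneg[OF lpos] by simp
next
  case (Suc N)
  define x where "x = real k + 1 - l - 1/8"
  have kx: "real (Suc k) = l + x + 1/8" by (simp add: x_def)
  have "real K2 \<le> real k" using Suc.prems by simp
  then have xs: "s - 1/8 \<le> x" using K2_gt unfolding x_def by linarith
  have xpos: "0 < x" using xs s6 by linarith
  have IH: "(\<Sum>j<N. PP l (Suc (Suc k) + j)) \<le> Hf l (real (Suc k) + 1 - l - 1/8) * PP l (Suc k)"
    using Suc.IH[of "Suc k"] Suc.prems by simp
  have e1: "real (Suc k) + 1 - l - 1/8 = x + 1" by (simp add: x_def)
  have "(\<Sum>j<Suc N. PP l (Suc k + j)) = PP l (Suc k) + (\<Sum>j<N. PP l (Suc (Suc k) + j))"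
    unfolding sum.lessThan_Suc_shift by simp
  also have "\<dots> \<le> PP l (Suc k) + Hf l (x + 1) * PP l (Suc k)" using IH e1 by simp
  also have "\<dots> = PP l k / real (Suc k) * (l * (1 + Hf l (x + 1)))"
    by (simp add: PP_Suc field_simps del: of_nat_Suc)
  also have "\<dots> \<le> PP l k / real (Suc k) * (Hf l x * (l + x + 1/8))"
    using Hf_super_up[OF s6 ls xs] PP_nonneg[OF lpos, of k]
    by (intro mult_left_mono) auto
  also have "\<dots> = Hf l x * PP l k" using kx by (simp del: of_nat_Suc)
  finally show ?case unfolding x_def .
qed

lemma tail_summable: "summable (\<lambda>j. PP l (Suc K2 + j))"
proof -
  have "summable (\<lambda>j. PP l j)" using PP_sums by (rule sums_summable)
  then have "summable (\<lambda>j. PP l (j + Suc K2))" by (rule summable_ignore_initial_segment)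
  then show ?thesis by (simp add: add.commute)
qed

lemma upper_tail: "suminf (\<lambda>j. PP l (Suc K2 + j)) \<le> Hf l (s - 1/8) * PP l K2"
proof -
  have "suminf (\<lambda>j. PP l (Suc K2 + j)) \<le> Hf l (real K2 + 1 - l - 1/8) * PP l K2"
    by (rule suminf_le_const[OF tail_summable]) (use up_partial in auto)
  also have "\<dots> \<le> Hf l (s - 1/8) * PP l K2"
    using K2_gt s6 PP_nonneg[OF lpos, of K2]
    by (intro mult_right_mono Hf_mono lpos) auto
  finally show ?thesis .
qed

definition u where "u = real K2 - l"
definition TU :: "real \<Rightarrow> real" where "TU t = t + (u* t*(t-1)/2 - t*(t-1)*(t-2)/6)/l"

lemma up_c_ind:
  "j < K2 - m \<Longrightarrow> PP l K2 * TU (real j + 1) \<le> (\<Sum>k\<in>{K2-j..K2}. PP l k) \<and>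
     PP l K2 * (1 + (real j * u - real j * (real j - 1)/2)/l) \<le> PP l (K2 - j)"
proof (induction j)
  case 0
  have "TU 1 = 1" by (simp add: TU_def)
  then show ?case by simp
next
  case (Suc j)
  have IH: "PP l K2 * TU (real j + 1) \<le> (\<Sum>k\<in>{K2-j..K2}. PP l k)"
     "PP l K2 * (1 + (real j * u - real j * (real j - 1)/2)/l) \<le> PP l (K2 - j)"
    using Suc by auto
  define k' where "k' = K2 - Suc j"
  have jK2: "Suc j \<le> K2" using Suc.prems by simp
  have k'S: "K2 - j = Suc k'" unfolding k'_def using jK2 by simp
  have "real (Suc k') = real (K2 - j)" using k'S by simp
  also have "\<dots> = real K2 - real j" using jK2 by (simp add: of_nat_diff)
  finally have rk: "real (Suc k') = u + l - real j" unfolding u_def by simp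
  have uj: "real j \<le> u" using Suc.prems m_gt unfolding u_def by linarith
  define B where "B = (real j * u - real j * (real j - 1)/2)/l"
  define z where "z = (u - real j)/l"
  have B0: "0 \<le> B"
  proof -
    have "real j * real j \<le> real j * u" using uj by (intro mult_left_mono) auto
    moreover have "0 \<le> real j * u" using uj by (intro mult_nonneg_nonneg) auto
    moreover have "real j * (real j - 1) = real j * real j - real j" by (simp add: algebra_simps)
    ultimately have "0 \<le> real j * u - real j * (real j - 1)/2" by linarith
    then show ?thesis unfolding B_def using lpos by simp
  qed
  have z0: "0 \<le> z" unfolding z_def using uj lpos by simp
  have Pk': "PP l k' = PP l (K2 - j) * (1 + z)"
  proof -
    have "PP l (Suc k') = PP l k' * l / real (Suc k')" by (rule PP_Suc)
    then have a: "PP l k' = PP l (Suc k') * (real (Suc k') / l)" using lpos by (simp add: field_simps del: of_nat_Suc)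
    have b: "real (Suc k') / l = 1 + z" unfolding z_def rk using lpos by (simp add: field_simps)
    show ?thesis by (subst a, subst b, subst k'S, rule refl)
  qed
  have "PP l K2 * (1 + B + z) \<le> PP l K2 * ((1 + B) * (1 + z))"
    using B0 z0 PP_nonneg[OF lpos, of K2] by (intro mult_left_mono) (auto simp: algebra_simps)
  also have "\<dots> = (PP l K2 * (1 + B)) * (1 + z)" by simp
  also have "\<dots> \<le> PP l (K2 - j) * (1 + z)" using IH(2) z0 unfolding B_def by (intro mult_right_mono) auto
  also have "\<dots> = PP l k'" using Pk' by simp
  finally have step: "PP l K2 * (1 + B + z) \<le> PP l k'" .
  have eqB: "1 + B + z = 1 + (real (Suc j) * u - real (Suc j) * (real (Suc j) - 1)/2)/l"
    unfolding B_def z_def using lpos by (simp add: field_simps)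
  have eqT: "TU (real (Suc j) + 1) = TU (real j + 1) + (1 + B + z)"
    unfolding TU_def B_def z_def using lpos by (simp add: field_simps)
  have set: "{K2 - Suc j..K2} = insert k' {K2-j..K2}" "k' \<notin> {K2-j..K2}"
    unfolding k'_def using jK2 by auto
  have "PP l K2 * TU (real (Suc j) + 1) = PP l K2 * TU (real j + 1) + PP l K2 * (1 + B + z)"
    using eqT by (simp add: distrib_left)
  also have "\<dots> \<le> (\<Sum>k\<in>{K2-j..K2}. PP l k) + PP l k'" using IH(1) step by simp
  also have "\<dots> = (\<Sum>k\<in>{K2 - Suc j..K2}. PP l k)" using set by simp
  finally show ?case using step eqB k'_def by simp
qed

lemma A2_ge: "PP l K2 * TU (real (K2 - m)) \<le> (\<Sum>k\<in>{Suc m..K2}. PP l k)"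
proof -
  have "K2 - m - 1 < K2 - m" using mK2 by simp
  from up_c_ind[OF this] have "PP l K2 * TU (real (K2 - m - 1) + 1) \<le> (\<Sum>k\<in>{K2 - (K2 - m - 1)..K2}. PP l k)" by simp
  moreover have "K2 - (K2 - m - 1) = Suc m" using mK2 by simp
  moreover have "real (K2 - m - 1) + 1 = real (K2 - m)" using mK2 by simp
  ultimately show ?thesis by simp
qed

lemma TU_ge: "(s-1)*(1 + (s-2)*(2* s-1)/(6* l)) \<le> TU (real (K2 - m))"
proof -
  define nn where "nn = real (K2 - m)"
  have nn: "nn = real K2 - real m" unfolding nn_def using mK2 by simp
  have u1: "u \<le> nn" "nn < u + 1" unfolding nn u_def using m_le m_gt by linarith+
  have u2: "s - 1 < u" "u \<le> s" unfolding u_def using K2_le K2_gt by linarith+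
  have TUe: "TU nn = nn * (1 + (nn-1)*(3* u - nn + 2)/(6* l))"
    unfolding TU_def using lpos by (simp add: field_simps)
  have p1: "(s-2)*(2* s-1) \<le> (nn-1)*(3* u - nn + 2)"
    using u1 u2 s6 by (intro mult_mono) auto
  have "(s-2)*(2* s-1)/(6* l) \<le> (nn-1)*(3* u - nn + 2)/(6* l)"
    using p1 lpos by (intro divide_right_mono) auto
  moreover have "0 \<le> (s-2)*(2* s-1)/(6* l)" using s6 lpos by (intro divide_nonneg_pos mult_nonneg_nonneg) auto
  ultimately have "(s-1)*(1 + (s-2)*(2* s-1)/(6* l)) \<le> nn * (1 + (nn-1)*(3* u - nn + 2)/(6* l))"
    using u1 u2 s6 by (intro mult_mono) auto
  then show ?thesis using TUe nn_def by simp
qed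

lemma upper_ok: "31/25 * suminf (\<lambda>j. PP l (Suc K2 + j)) \<le> (\<Sum>k\<in>{Suc m..K2}. PP l k)"
proof -
  have "31/25 * suminf (\<lambda>j. PP l (Suc K2 + j)) \<le> 31/25 * (Hf l (s - 1/8) * PP l K2)"
    using upper_tail by simp
  also have "\<dots> = (31/25 * Hf l (s - 1/8)) * PP l K2" by simp
  also have "\<dots> \<le> ((s-1)*(1 + (s-2)*(2* s-1)/(6* l))) * PP l K2"
    using final_up[OF s6 ls] PP_nonneg[OF lpos, of K2] by (intro mult_right_mono) auto
  also have "\<dots> \<le> TU (real (K2 - m)) * PP l K2"
    using TU_ge PP_nonneg[OF lpos, of K2] by (intro mult_right_mono) auto
  also have "\<dots> \<le> (\<Sum>k\<in>{Suc m..K2}. PP l k)" using A2_ge by (simp add: mult.commute)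
  finally show ?thesis .
qed

definition k0 :: nat where "k0 = K1 - 1"

lemma K1pos: "1 \<le> K1" using K1_ge s6 ls sdef l36 K1_lt
proof -
  have "s \<le> l - 1"
  proof -
    have "s * 2 \<le> s * s" using s6 by (intro mult_left_mono) auto
    then show ?thesis using ls s6 unfolding power2_eq_square by linarith
  qed
  then show ?thesis using K1_ge by simp
qed

lemma k0r: "real k0 = real K1 - 1" unfolding k0_def using K1pos by (simp add: of_nat_diff)

lemma K1S: "K1 = Suc k0" unfolding k0_def using K1pos by simp

lemma k0m: "k0 < m" using k0r K1_lt m_gt s6 by linarith

definition d where "d = l - real k0"

lemma d_bounds: "s < d" "d \<le> s + 1" unfolding d_def using k0r K1_ge K1_lt by linarith+

lemma low_tail_ind: "k \<le> k0 \<Longrightarrow> (\<Sum>i<k. PP l i) \<le> Hf l (l - real k + 1) * PP l k"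
proof (induction k)
  case 0
  then show ?case using Hf_nonneg[OF _ lpos, of "l + 1"] PP_nonneg[OF lpos] lpos by simp
next
  case (Suc k)
  define y where "y = l - real k"
  have "real (Suc k) \<le> real k0" using Suc.prems by linarith
  then have ys: "s + 1 \<le> y" unfolding y_def using k0r K1_lt by simp
  have IH: "(\<Sum>i<k. PP l i) \<le> Hf l (y + 1) * PP l k" using Suc y_def by simp
  have rk: "real (Suc k) = l - y + 1" unfolding y_def by simp
  have "(\<Sum>i<Suc k. PP l i) = (\<Sum>i<k. PP l i) + PP l k" by simp
  also have "\<dots> \<le> PP l k * (1 + Hf l (y + 1))" using IH by (simp add: algebra_simps)
  also have "PP l k = PP l (Suc k) / l * real (Suc k)"
    using PP_Suc[of l k] lpos by (simp add: field_simps del: of_nat_Suc)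
  also have "PP l (Suc k) / l * real (Suc k) * (1 + Hf l (y + 1)) = PP l (Suc k) / l * ((l - y + 1) * (1 + Hf l (y + 1)))"
    using rk by simp
  also have "\<dots> \<le> PP l (Suc k) / l * (l * Hf l y)"
    using Hf_super_low[OF s6 ls ys] PP_nonneg[OF lpos, of "Suc k"] lpos
    by (intro mult_left_mono) auto
  also have "\<dots> = Hf l (l - real (Suc k) + 1) * PP l (Suc k)"
    using lpos unfolding y_def by simp
  finally show ?case .
qed

lemma low_tail: "(\<Sum>i<K1. PP l i) \<le> (1 + Hf l (s + 1)) * PP l k0"
proof -
  have "(\<Sum>i<K1. PP l i) = (\<Sum>i<k0. PP l i) + PP l k0" unfolding K1S by simp
  also have "\<dots> \<le> Hf l (l - real k0 + 1) * PP l k0 + PP l k0" using low_tail_ind[of k0] by simp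
  also have "\<dots> \<le> Hf l (s + 1) * PP l k0 + PP l k0"
    using d_bounds s6 PP_nonneg[OF lpos, of k0] unfolding d_def
    by (intro add_right_mono mult_right_mono Hf_mono lpos) auto
  finally show ?thesis by (simp add: algebra_simps)
qed

definition TL :: "real \<Rightarrow> real" where "TL t = t + (d* t*(t+1)/2 - t*(t+1)*(t+2)/6)/l"

lemma low_c_ind:
  "t \<le> m - k0 \<Longrightarrow> PP l k0 * TL (real t) \<le> (\<Sum>k\<in>{Suc k0..k0+t}. PP l k) \<and>
     PP l k0 * (1 + (real t * d - real t * (real t + 1)/2)/l) \<le> PP l (k0 + t)"
proof (induction t)
  case 0
  then show ?case by (simp add: TL_def)
next
  case (Suc t)
  have IH: "PP l k0 * TL (real t) \<le> (\<Sum>k\<in>{Suc k0..k0+t}. PP l k)"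
     "PP l k0 * (1 + (real t * d - real t * (real t + 1)/2)/l) \<le> PP l (k0 + t)"
    using Suc by auto
  have tm: "real k0 + real (Suc t) \<le> real m" using Suc.prems k0m by linarith
  define C where "C = (real t * d - real t * (real t + 1)/2)/l"
  define zz where "zz = d - real t - 1"
  have zz0: "0 \<le> zz" unfolding zz_def d_def using tm m_le by simp
  have rk: "real (Suc (k0 + t)) = l - zz" unfolding zz_def d_def by simp
  have rkpos: "0 < l - zz" using rk by (metis of_nat_0_less_iff zero_less_Suc)
  have C0: "0 \<le> C"
  proof -
    have "real t + 1 \<le> d" unfolding d_def using tm m_le by simp
    then have "real t * (real t + 1) \<le> real t * d" by (intro mult_left_mono) auto
    moreover have "0 \<le> real t * d" using d_bounds s6 by (intro mult_nonneg_nonneg) auto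
    ultimately have "0 \<le> real t * d - real t * (real t + 1)/2" by linarith
    then show ?thesis unfolding C_def using lpos by simp
  qed
  have ratio: "1 + zz / l \<le> l / (l - zz)"
  proof -
    have "(1 + zz / l) * (l - zz) = l - zz^2 / l" using lpos by (simp add: field_simps power2_eq_square)
    also have "\<dots> \<le> l" using lpos by simp
    finally show ?thesis using rkpos by (simp add: le_divide_eq)
  qed
  have "PP l (k0 + Suc t) = PP l (k0 + t) * (l / (l - zz))"
    using PP_Suc[of l "k0 + t"] rk by simp
  moreover have "PP l k0 * (1 + C + zz / l) \<le> PP l (k0 + t) * (1 + zz / l)"
  proof -
    have "0 \<le> C * (zz / l)" using C0 zz0 lpos by (intro mult_nonneg_nonneg divide_nonneg_pos) auto
    moreover have "(1 + C) * (1 + zz / l) = 1 + C + zz / l + C * (zz / l)" by (simp add: algebra_simps add_divide_distrib)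
    ultimately have "1 + C + zz / l \<le> (1 + C) * (1 + zz / l)" by linarith
    then have "PP l k0 * (1 + C + zz / l) \<le> PP l k0 * ((1 + C) * (1 + zz / l))"
      using PP_nonneg[OF lpos, of k0] by (intro mult_left_mono) auto
    also have "\<dots> = (PP l k0 * (1 + C)) * (1 + zz / l)" by simp
    also have "\<dots> \<le> PP l (k0 + t) * (1 + zz / l)"
      using IH(2) zz0 lpos unfolding C_def by (intro mult_right_mono) auto
    finally show ?thesis .
  qed
  moreover have "PP l (k0 + t) * (1 + zz / l) \<le> PP l (k0 + t) * (l / (l - zz))"
    using ratio PP_nonneg[OF lpos] by (intro mult_left_mono) auto
  ultimately have step: "PP l k0 * (1 + C + zz / l) \<le> PP l (k0 + Suc t)" by linarith
  have eqC: "1 + C + zz / l = 1 + (real (Suc t) * d - real (Suc t) * (real (Suc t) + 1)/2)/l"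
    unfolding C_def zz_def using lpos by (simp add: field_simps)
  have eqT: "TL (real (Suc t)) = TL (real t) + (1 + C + zz / l)"
    unfolding TL_def C_def zz_def using lpos by (simp add: field_simps)
  have set: "{Suc k0..k0 + Suc t} = insert (k0 + Suc t) {Suc k0..k0+t}" "k0 + Suc t \<notin> {Suc k0..k0+t}"
    by auto
  have "PP l k0 * TL (real (Suc t)) = PP l k0 * TL (real t) + PP l k0 * (1 + C + zz / l)"
    using eqT by (simp add: distrib_left)
  also have "\<dots> \<le> (\<Sum>k\<in>{Suc k0..k0+t}. PP l k) + PP l (k0 + Suc t)" using IH(1) step by simp
  also have "\<dots> = (\<Sum>k\<in>{Suc k0..k0 + Suc t}. PP l k)" using set by simp
  finally show ?case using step eqC by simp
qed

lemma A1_ge: "PP l k0 * TL (real (m - k0)) \<le> (\<Sum>k\<in>{K1..m}. PP l k)"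
proof -
  from low_c_ind[of "m - k0"] have "PP l k0 * TL (real (m - k0)) \<le> (\<Sum>k\<in>{Suc k0..k0 + (m - k0)}. PP l k)" by simp
  moreover have "k0 + (m - k0) = m" using k0m by simp
  ultimately show ?thesis using K1S by simp
qed

lemma TL_ge: "(s-1)*(1 + (s-1)/(3* s)) \<le> TL (real (m - k0))"
proof -
  define nn where "nn = real (m - k0)"
  have nn: "nn = real m - real k0" unfolding nn_def using k0m by (simp add: of_nat_diff)
  have n1: "d - 1 < nn" "nn \<le> d" unfolding nn d_def using m_le m_gt by linarith+
  have TLe: "TL nn = nn * (1 + (nn+1)*(3* d - nn - 2)/(6* l))"
    unfolding TL_def using lpos by (simp add: field_simps)
  have p1: "s*(2* s-2) \<le> (nn+1)*(3* d - nn - 2)"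
    using n1 d_bounds s6 by (intro mult_mono) auto
  have "s*(2* s-2)/(6* l) \<le> (nn+1)*(3* d - nn - 2)/(6* l)"
    using p1 lpos by (intro divide_right_mono) auto
  moreover have "s*(2* s-2)/(6* l) = (s-1)/(3* s)" using ls s6 by (simp add: field_simps power2_eq_square)
  moreover have "0 \<le> (s-1)/(3* s)" using s6 by simp
  ultimately have "(s-1)*(1 + (s-1)/(3* s)) \<le> nn * (1 + (nn+1)*(3* d - nn - 2)/(6* l))"
    using n1 d_bounds s6 by (intro mult_mono) auto
  then show ?thesis using TLe nn_def by simp
qed

lemma lower_ok: "31/25 * (\<Sum>i<K1. PP l i) \<le> (\<Sum>k\<in>{K1..m}. PP l k)"
proof -
  have "31/25 * (\<Sum>i<K1. PP l i) \<le> 31/25 * ((1 + Hf l (s + 1)) * PP l k0)"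
    using low_tail by simp
  also have "\<dots> = (31/25 * (1 + Hf l (s + 1))) * PP l k0" by simp
  also have "\<dots> \<le> ((s-1)*(1 + (s-1)/(3* s))) * PP l k0"
    using final_low[OF s6 ls] PP_nonneg[OF lpos, of k0] by (intro mult_right_mono) auto
  also have "\<dots> \<le> TL (real (m - k0)) * PP l k0"
    using TL_ge PP_nonneg[OF lpos, of k0] by (intro mult_right_mono) auto
  also have "\<dots> \<le> (\<Sum>k\<in>{K1..m}. PP l k)" using A1_ge by (simp add: mult.commute)
  finally show ?thesis .
qed

lemma big_bound: "3/2 * exp (-1) \<le> FF l"
proof -
  have K1m: "K1 \<le> m" using K1S k0m by simp
  have GF: "G K1 K2 l \<le> FF l"
  proof (rule FF_ge_G[OF lpos])
    fix k assume "K1 \<le> k" "k \<le> K2"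
    then have "real K1 \<le> real k" "real k \<le> real K2" by auto
    then show "\<bar>real k - l\<bar> \<le> sqrt l" unfolding abs_le_iff sdef[symmetric] using K1_ge K2_le by (intro conjI; linarith)
  qed
  have split: "G K1 K2 l = (\<Sum>k\<in>{K1..m}. PP l k) + (\<Sum>k\<in>{Suc m..K2}. PP l k)"
  proof -
    have "{K1..K2} = {K1..m} \<union> {Suc m..K2}" using K1m mK2 by auto
    moreover have "{K1..m} \<inter> {Suc m..K2} = {}" by auto
    ultimately show ?thesis unfolding G_def by (simp add: sum.union_disjoint)
  qed
  have tot: "1 = (\<Sum>i<K1. PP l i) + G K1 K2 l + suminf (\<lambda>j. PP l (Suc K2 + j))"
  proof -
    have sm: "summable (\<lambda>k. PP l k)" using PP_sums by (rule sums_summable)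
    have "1 = (\<Sum>k. PP l k)" using PP_sums by (simp add: sums_iff)
    also have "\<dots> = (\<Sum>j. PP l (j + Suc K2)) + (\<Sum>i<Suc K2. PP l i)"
      by (rule suminf_split_initial_segment[OF sm])
    also have "(\<Sum>i<Suc K2. PP l i) = (\<Sum>i<K1. PP l i) + G K1 K2 l"
    proof -
      have "{..<Suc K2} = {..<K1} \<union> {K1..K2}" using K1m mK2 by auto
      moreover have "{..<K1} \<inter> {K1..K2} = {}" by auto
      ultimately show ?thesis unfolding G_def by (simp add: sum.union_disjoint)
    qed
    finally show ?thesis by (simp add: add.commute add.left_commute)
  qed
  have "31/25 * (1 - G K1 K2 l) \<le> G K1 K2 l"
    using tot split upper_ok lower_ok by (simp add: algebra_simps)
  then have g: "31/56 \<le> G K1 K2 l" by simp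
  have "3/2 * exp (-1) \<le> (31/56::real)"
  proof -
    have "84/31 \<le> exp (1::real)" using e_lo by simp
    then have "3/2 * exp (-1) \<le> 3/2 * (31/84::real)"
      by (simp add: exp_minus divide_simps)
    then show ?thesis by simp
  qed
  then show ?thesis using g GF by linarith
qed
end


lemma main_bound: "0 < l \<Longrightarrow> 3 / 2 * exp (-1) \<le> (\<Sum>k\<in>{k. \<bar>real k - l\<bar> \<le> sqrt l}. PP l k)"
proof -
  assume l: "0 < l"
  have "3/2 * exp (-1) \<le> FF l"
  proof (cases "l \<le> 1/4")
    case True
    have "sqrt l \<le> 1" using True by simp
    then have "sqrt l * sqrt l \<le> 1 * sqrt l" using l by (intro mult_right_mono) auto
    then have lsq: "l \<le> sqrt l" using l by simp
    have "G 0 0 l \<le> FF l" by (rule FF_ge_G[OF l]) (use lsq l in auto)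
    moreover have "G 0 0 l = exp (- l)" by (simp add: G_def PP_def)
    moreover have "3/2 * exp (-1) \<le> exp (- l)"
    proof -
      have "3/2 \<le> exp (3/4::real)" using exp_ge_add_one_self[of "3/4::real"] by simp
      then have "3/2 * exp (-1) \<le> exp (3/4) * exp (-1::real)" by simp
      also have "\<dots> = exp (-1/4)" by (simp add: mult_exp_exp)
      also have "\<dots> \<le> exp (- l)" using True by simp
      finally show ?thesis .
    qed
    ultimately show ?thesis by linarith
  next
    case False
    show ?thesis
    proof (cases "l \<le> 36")
      case True
      then show ?thesis using numeric_range False unfolding cc_def by auto
    next
      case False
      then interpret big l "sqrt l" by unfold_locales auto
      show ?thesis by (rule big_bound)
    qed
  qed
  then show ?thesis unfolding FF_def .
qed

theorem theorem4p1:
  shows "(INF l\<in>{0::real<..}.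
           measure_pmf.prob (poisson_pmf l)
             {k. \<bar>real k - measure_pmf.expectation (poisson_pmf l) real\<bar>
                   \<le> sqrt (measure_pmf.variance (poisson_pmf l) real)})
         = 3 / 2 * exp (-1)"
proof -
  define F where "F l = (\<Sum>k\<in>{k. \<bar>real k - l\<bar> \<le> sqrt l}. PP l k)" for l
  have "(INF l\<in>{0::real<..}.
           measure_pmf.prob (poisson_pmf l)
             {k. \<bar>real k - measure_pmf.expectation (poisson_pmf l) real\<bar>
                   \<le> sqrt (measure_pmf.variance (poisson_pmf l) real)}) = (INF l\<in>{0::real<..}. F l)"
    by (rule INF_cong) (auto simp: prob_eq F_def)
  also have "\<dots> = 3 / 2 * exp (-1)"
  proof (rule antisym)
    show "3 / 2 * exp (-1) \<le> (INF l\<in>{0::real<..}. F l)"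
      unfolding F_def by (rule cINF_greatest) (use main_bound in auto)
  next
    have bdd: "bdd_below (F ` {0<..})"
      by (rule bdd_belowI[of _ 0]) (auto simp: F_def intro!: sum_nonneg PP_nonneg)
    define g where "g l = l * exp (- l) + l^2 / 2 * exp (- l)" for l :: real
    have Fg: "F l = g l" if "1 < l" "l < 3/2" for l
      using near1[OF that] by (simp add: F_def g_def PP_def fact_numeral)
    have "continuous (at_right 1) g" unfolding g_def by (intro continuous_intros) auto
    then have lim: "(g \<longlongrightarrow> g 1) (at_right 1)"
      by (simp add: continuous_within)
    have g1: "g 1 = 3 / 2 * exp (-1)" by (simp add: g_def field_simps)
    show "(INF l\<in>{0::real<..}. F l) \<le> 3 / 2 * exp (-1)"
    proof (rule ccontr)
      assume "\<not> ?thesis"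
      then have lt: "g 1 < (INF l\<in>{0::real<..}. F l)" using g1 by simp
      have "eventually (\<lambda>l. g l < (INF l\<in>{0::real<..}. F l)) (at_right 1)"
        using order_tendstoD(2)[OF lim lt] .
      moreover have "eventually (\<lambda>l. 1 < l \<and> l < (3/2::real)) (at_right 1)"
        using eventually_at_right_real[of 1 "3/2"] by simp
      ultimately have "eventually (\<lambda>l. g l < (INF l\<in>{0::real<..}. F l) \<and> 1 < l \<and> l < (3/2::real)) (at_right 1)"
        by (rule eventually_conj)
      then obtain l where l: "g l < (INF l\<in>{0::real<..}. F l)" "1 < l" "l < 3/2"
        using eventually_happens[of _ "at_right (1::real)"] by auto
      have "(INF l\<in>{0::real<..}. F l) \<le> F l"
        using l by (intro cINF_lower bdd) auto
      then show False using l Fg[of l] by simp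
    qed
  qed
  finally show ?thesis .
qed


end
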